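(* Let $(\phi,V),(\phi',V')$ be finite-dimensional representations of $\mathfrak l_m$. On $\mathcal S(V,V')=\mathbb C[x,\xi]\otimes\mathrm{Hom}(V,V')$: (i) $\mathrm{Lie}^{\mathcal S}(\Omega_{\mathfrak a_m})=\hom(\Omega_{\mathfrak l_m})-2\sum_{i,j}\hom(x_i\partial_{x_j})\,\xi_i\partial_{\xi_j}+\hom(E_x)\bigl(\hom(E_x)-2E_\xi-m-1\bigr)+2E_\xi(E_\xi+m)$; (ii) $\mathrm{Lie}^{\mathrm{NS}}(\Omega_{\mathfrak a_m})=\mathrm{Lie}^{\mathcal S}(\Omega_{\mathfrak a_m})-2\sum_{i,j}\rho_\phi(x_i\partial_{x_j})\,\partial_{\xi_j}\partial_{x_i}-2\bigl(\rho_\phi(E_x)-E_\xi\bigr)\mathrm{Div}$; (iii) if $V=\mathbb C_\gamma$, then $\mathrm{Lie}^{\mathrm{NS}}(\Omega_{\mathfrak a_m})=\mathrm{Lie}^{\mathcal S}(\Omega_{\mathfrak a_m})+2\bigl(E_\xi+(m+1)\gamma\bigr)\mathrm{Div}$.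
   Context: $\mathrm{Vec}\,\mathbb R^m$ is the Lie algebra of complex polynomial vector fields on $\mathbb R^m$; $E_x=\sum_r x_r\partial_{x_r}$; $\mathfrak a_m=\mathrm{Span}\{\partial_{x_i},x_j\partial_{x_i},x_jE_x\}$, $\mathfrak l_m=\mathrm{Span}\{x_j\partial_{x_i}\}\cong\mathfrak{gl}_m$. $\Omega_{\mathfrak l_m}=\sum_{i,j}(x_i\partial_{x_j})(x_j\partial_{x_i})\in U(\mathfrak l_m)$, $\Omega_{\mathfrak a_m}=\Omega_{\mathfrak l_m}+E_x(E_x-m-1)-2\sum_i(x_iE_x)(\partial_{x_i})\in U(\mathfrak a_m)$. $\mathbb C_\gamma$ is the one-dimensional $\mathfrak l_m$-module with $x_i\partial_{x_j}\mapsto\gamma\delta_{ij}$. Tensor field action: $\mathrm{Lie}_\phi(X)h=\sum_jX_j\partial_{x_j}h+\sum_{i,j}(\partial_{x_i}X_j)\phi(x_i\partial_{x_j})h$ on $\mathcal F(V)=\mathbb C[x]\otimes V$. $\mathcal D(V,V')=\mathbb C[x,\partial_x]\otimes\mathrm{Hom}(V,V')$ with action $X\cdot T=\mathrm{Lie}_{\phi'}(X)\circ T-T\circ\mathrm{Lie}_\phi(X)$. Let $\mathcal S(V,V')=\mathbb C[x_1,\dots,x_m,\xi_1,\dots,\xi_m]\otimes\mathrm{Hom}(V,V')$ and let $\mathrm{NS}:\mathcal D(V,V')\to\mathcal S(V,V')$ be the linear bijection $x^I\partial_x^J\otimes\tau\mapsto x^I\xi^J\otimes\tau$ (normal order symbol).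 $\mathrm{Lie}^{\mathrm{NS}}(X)=\mathrm{NS}\circ(X\cdot)\circ\mathrm{NS}^{-1}$ is the transported action. Let $\hom$ denote the $\mathfrak l_m$-action $\hom(Y)\tau=\phi'(Y)\tau-\tau\phi(Y)$ on $\mathrm{Hom}(V,V')$ and $\rho_\phi(Y)\tau=-\tau\circ\phi(Y)$, both extended to $U(\mathfrak l_m)$ and acting on the $\mathrm{Hom}$ factor. The symbol action is $\mathrm{Lie}^{\mathcal S}(X)=\sum_jX_j\partial_{x_j}-\sum_{i,j}(\partial_{x_i}X_j)\xi_j\partial_{\xi_i}+\sum_{i,j}(\partial_{x_i}X_j)\hom(x_i\partial_{x_j})$ (the $\xi$-degree-preserving part of $\mathrm{Lie}^{\mathrm{NS}}(X)$), extended to $U(\mathfrak a_m)$. Finally $E_\xi=\sum_r\xi_r\partial_{\xi_r}$ and $\mathrm{Div}=\sum_i\partial_{\xi_i}\partial_{x_i}$. *)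

theory Defs
  imports "HOL-Analysis.Analysis" "HOL-Library.Function_Algebras"
begin

text \<open>The index set of coordinates x_1..x_m is a finite type 'm (m = CARD('m)).  V = complex^'n, V' = complex^'k, and
 Hom(V,V') = complex^'n^'k (matrices).  A representation phi of l_m = gl_m is given by its
 values phi i j = phi(x_i d_{x_j}).  Polynomials are coefficient functions on multi-indices
 (with finite support); a symbol s in S(V,V') is s I J = coefficient of x^I xi^J.\<close>

type_synonym 'm mi = "'m \<Rightarrow> nat"
type_synonym ('m,'n,'k) sym = "'m mi \<Rightarrow> 'm mi \<Rightarrow> complex^'n^'k"
type_synonym 'm vf = "'m \<Rightarrow> ('m mi \<Rightarrow> complex)"

definition is_glrep :: "('m \<Rightarrow> 'm \<Rightarrow> complex^'n::finite^'n) \<Rightarrow> bool" where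
  "is_glrep \<phi> \<longleftrightarrow> (\<forall>i j k l. \<phi> i j ** \<phi> k l - \<phi> k l ** \<phi> i j
      = (if j = k then \<phi> i l else 0) - (if l = i then \<phi> k j else 0))"

definition unitv :: "'m \<Rightarrow> 'm mi" where "unitv i = (\<lambda>j. if j = i then 1 else 0)"

definition mono :: "'m mi \<Rightarrow> ('m mi \<Rightarrow> complex)" where
  "mono A = (\<lambda>I. if I = A then 1 else 0)"

text \<open>polynomial vector fields X = sum_j X_j d_{x_j}, given by components X_j\<close>
definition vf_xd :: "'m \<Rightarrow> 'm \<Rightarrow> 'm vf" where
  "vf_xd i j = (\<lambda>k. if k = j then mono (unitv i) else (\<lambda>_. 0))"
definition vf_d :: "'m \<Rightarrow> 'm vf" where
  "vf_d i = (\<lambda>k. if k = i then mono (\<lambda>_. 0) else (\<lambda>_. 0))"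
definition vf_E :: "'m vf" where
  "vf_E = (\<lambda>k. mono (unitv k))"
definition vf_xE :: "'m \<Rightarrow> 'm vf" where
  "vf_xE i = (\<lambda>k. mono (\<lambda>r. unitv i r + unitv k r))"

definition pd :: "'m \<Rightarrow> ('m mi \<Rightarrow> complex) \<Rightarrow> ('m mi \<Rightarrow> complex)" where
  "pd i p = (\<lambda>I. of_nat (I i + 1) * p (I(i := I i + 1)))"

definition msc :: "complex \<Rightarrow> complex^'n::finite^'k::finite \<Rightarrow> complex^'n^'k" where
  "msc c A = (\<chi> a b. c * A $ a $ b)"

definition ssc :: "complex \<Rightarrow> ('m::finite,'n::finite,'k::finite) sym \<Rightarrow> ('m::finite,'n::finite,'k::finite) sym" where
  "ssc c s = (\<lambda>I J. msc c (s I J))"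

definition s_mx :: "'m \<Rightarrow> ('m::finite,'n::finite,'k::finite) sym \<Rightarrow> ('m::finite,'n::finite,'k::finite) sym" where
  "s_mx i s = (\<lambda>I J. if 0 < I i then s (I(i := I i - 1)) J else 0)"
definition s_dx :: "'m \<Rightarrow> ('m::finite,'n::finite,'k::finite) sym \<Rightarrow> ('m::finite,'n::finite,'k::finite) sym" where
  "s_dx i s = (\<lambda>I J. msc (of_nat (I i + 1)) (s (I(i := I i + 1)) J))"
definition s_mxi :: "'m \<Rightarrow> ('m::finite,'n::finite,'k::finite) sym \<Rightarrow> ('m::finite,'n::finite,'k::finite) sym" where
  "s_mxi i s = (\<lambda>I J. if 0 < J i then s I (J(i := J i - 1)) else 0)"
definition s_dxi :: "'m \<Rightarrow> ('m::finite,'n::finite,'k::finite) sym \<Rightarrow> ('m::finite,'n::finite,'k::finite) sym" where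
  "s_dxi i s = (\<lambda>I J. msc (of_nat (J i + 1)) (s I (J(i := J i + 1))))"
definition s_pmul :: "('m::finite mi \<Rightarrow> complex) \<Rightarrow> ('m::finite,'n::finite,'k::finite) sym \<Rightarrow> ('m::finite,'n::finite,'k::finite) sym" where
  "s_pmul p s = (\<lambda>I J. \<Sum>A\<in>{A. A \<le> I}. msc (p A) (s (\<lambda>r. I r - A r) J))"

definition s_hom :: "('m \<Rightarrow> 'm \<Rightarrow> complex^'n::finite^'n) \<Rightarrow> ('m \<Rightarrow> 'm \<Rightarrow> complex^'k::finite^'k)
    \<Rightarrow> 'm \<Rightarrow> 'm \<Rightarrow> ('m::finite,'n::finite,'k::finite) sym \<Rightarrow> ('m::finite,'n::finite,'k::finite) sym" where
  "s_hom \<phi> \<phi>' i j s = (\<lambda>I J. \<phi>' i j ** s I J - s I J ** \<phi> i j)"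
definition s_rho :: "('m \<Rightarrow> 'm \<Rightarrow> complex^'n::finite^'n) \<Rightarrow> 'm \<Rightarrow> 'm \<Rightarrow> ('m::finite,'n::finite,'k::finite) sym \<Rightarrow> ('m::finite,'n::finite,'k::finite) sym" where
  "s_rho \<phi> i j s = (\<lambda>I J. - (s I J ** \<phi> i j))"

definition homOmega where
  "homOmega \<phi> \<phi>' s = (\<Sum>i\<in>UNIV. \<Sum>j\<in>UNIV. s_hom \<phi> \<phi>' i j (s_hom \<phi> \<phi>' j i s))"
definition homE where
  "homE \<phi> \<phi>' s = (\<Sum>r\<in>UNIV. s_hom \<phi> \<phi>' r r s)"
definition rhoE where
  "rhoE \<phi> s = (\<Sum>r\<in>UNIV. s_rho \<phi> r r s)"
definition Exi :: "('m::finite,'n::finite,'k::finite) sym \<Rightarrow> ('m::finite,'n::finite,'k::finite) sym" where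
  "Exi s = (\<Sum>r\<in>UNIV. s_mxi r (s_dxi r s))"
definition Div :: "('m::finite,'n::finite,'k::finite) sym \<Rightarrow> ('m::finite,'n::finite,'k::finite) sym" where
  "Div s = (\<Sum>i\<in>UNIV. s_dxi i (s_dx i s))"

definition LieS :: "('m::finite \<Rightarrow> 'm \<Rightarrow> complex^'n::finite^'n) \<Rightarrow> ('m \<Rightarrow> 'm \<Rightarrow> complex^'k::finite^'k)
    \<Rightarrow> 'm vf \<Rightarrow> ('m::finite,'n::finite,'k::finite) sym \<Rightarrow> ('m::finite,'n::finite,'k::finite) sym" where
  "LieS \<phi> \<phi>' X s =
     (\<Sum>j\<in>UNIV. s_pmul (X j) (s_dx j s))
   - (\<Sum>i\<in>UNIV. \<Sum>j\<in>UNIV. s_pmul (pd i (X j)) (s_mxi j (s_dxi i s)))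
   + (\<Sum>i\<in>UNIV. \<Sum>j\<in>UNIV. s_pmul (pd i (X j)) (s_hom \<phi> \<phi>' i j s))"

definition Fpoly :: "('m::finite mi \<Rightarrow> complex^'n::finite) set" where
  "Fpoly = {f. finite {K. f K \<noteq> 0}}"
definition Ssym :: "('m::finite,'n::finite,'k::finite) sym set" where
  "Ssym = {s. finite {p. s (fst p) (snd p) \<noteq> 0}}"

definition f_dx :: "'m \<Rightarrow> ('m::finite mi \<Rightarrow> complex^'n::finite) \<Rightarrow> ('m::finite mi \<Rightarrow> complex^'n::finite)" where
  "f_dx j f = (\<lambda>K. of_nat (K j + 1) *s f (K(j := K j + 1)))"
definition f_pmul :: "('m::finite mi \<Rightarrow> complex) \<Rightarrow> ('m::finite mi \<Rightarrow> complex^'n::finite) \<Rightarrow> ('m::finite mi \<Rightarrow> complex^'n::finite)" where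
  "f_pmul p f = (\<lambda>K. \<Sum>A\<in>{A. A \<le> K}. p A *s f (\<lambda>r. K r - A r))"

definition LieF :: "('m::finite \<Rightarrow> 'm \<Rightarrow> complex^'n::finite^'n) \<Rightarrow> 'm vf
    \<Rightarrow> ('m::finite mi \<Rightarrow> complex^'n::finite) \<Rightarrow> ('m::finite mi \<Rightarrow> complex^'n::finite)" where
  "LieF \<phi> X f = (\<Sum>j\<in>UNIV. f_pmul (X j) (f_dx j f))
     + (\<Sum>i\<in>UNIV. \<Sum>j\<in>UNIV. f_pmul (pd i (X j)) (\<lambda>K. \<phi> i j *v f K))"

definition mpow :: "'m mi \<Rightarrow> ('m::finite mi \<Rightarrow> complex^'n::finite) \<Rightarrow> ('m::finite mi \<Rightarrow> complex^'n::finite)" where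
  "mpow I f = (\<lambda>K. if I \<le> K then f (\<lambda>r. K r - I r) else 0)"
definition dpow :: "'m::finite mi \<Rightarrow> ('m::finite mi \<Rightarrow> complex^'n::finite) \<Rightarrow> ('m::finite mi \<Rightarrow> complex^'n::finite)" where
  "dpow J f = (\<lambda>L. of_nat (\<Prod>r\<in>UNIV. fact (L r + J r) div fact (L r)) *s f (\<lambda>r. L r + J r))"

text \<open>NS^{-1}: the differential operator with normal-order symbol s, acting on F(V)\<close>
definition opS :: "('m::finite,'n::finite,'k::finite) sym \<Rightarrow> ('m::finite mi \<Rightarrow> complex^'n::finite) \<Rightarrow> ('m mi \<Rightarrow> complex^'k)" where
  "opS s f = (\<Sum>p\<in>{p. s (fst p) (snd p) \<noteq> 0}.
       mpow (fst p) (dpow (snd p) (\<lambda>L. s (fst p) (snd p) *v f L)))"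

text \<open>Transported action Lie^NS(X) = NS o (X .) o NS^{-1}\<close>
definition LieNS :: "('m::finite \<Rightarrow> 'm \<Rightarrow> complex^'n::finite^'n) \<Rightarrow> ('m \<Rightarrow> 'm \<Rightarrow> complex^'k::finite^'k)
    \<Rightarrow> 'm vf \<Rightarrow> ('m::finite,'n::finite,'k::finite) sym \<Rightarrow> ('m::finite,'n::finite,'k::finite) sym" where
  "LieNS \<phi> \<phi>' X s = (THE t. t \<in> Ssym \<and>
     (\<forall>f\<in>Fpoly. opS t f = LieF \<phi>' X (opS s f) - opS s (LieF \<phi> X f)))"

text \<open>Image of the Casimir Omega_{a_m} under the extension of an action L to U(a_m)\<close>
definition OmegaA :: "('m::finite vf \<Rightarrow> ('m::finite,'n::finite,'k::finite) sym \<Rightarrow> ('m::finite,'n::finite,'k::finite) sym)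
    \<Rightarrow> ('m::finite,'n::finite,'k::finite) sym \<Rightarrow> ('m::finite,'n::finite,'k::finite) sym" where
  "OmegaA L s =
     (\<Sum>i\<in>UNIV. \<Sum>j\<in>UNIV. L (vf_xd i j) (L (vf_xd j i) s))
   + L vf_E (L vf_E s - ssc (of_nat (CARD('m) + 1)) s)
   - ssc 2 (\<Sum>i\<in>UNIV. L (vf_xE i) (L (vf_d i) s))"

end

theory Submission
  imports Defs
begin



lemma sum_app: "(sum F A) x = sum (\<lambda>a. F a x) A"
  by (induction A rule: infinite_finite_induct) auto

lemma msc_nth[simp]: "msc c A $ a $ b = c * A $ a $ b"
  by (simp add: msc_def)

lemma msc_0[simp]: "msc 0 A = 0" and msc_1[simp]: "msc 1 A = A"
  and msc_z[simp]: "msc c 0 = 0"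
  by (simp_all add: vec_eq_iff)
lemma msc_add: "msc (a + b) A = msc a A + msc b A"
  by (simp add: vec_eq_iff algebra_simps)
lemma msc_addR: "msc c (A + B) = msc c A + msc c B"
  by (simp add: vec_eq_iff algebra_simps)
lemma msc_diffR: "msc c (A - B) = msc c A - msc c B"
  by (simp add: vec_eq_iff algebra_simps)
lemma msc_msc: "msc c (msc d A) = msc (c*d) A"
  by (simp add: vec_eq_iff algebra_simps)
lemma msc_sumR: "msc c (sum F S) = sum (\<lambda>x. msc c (F x)) S"
  by (simp add: vec_eq_iff sum_component sum_distrib_left)
lemma msc_uminus: "msc c (- A) = - msc c A"
  by (simp add: vec_eq_iff)
lemma msc_mmult_left: "msc c (A ** B) = A ** msc c B"
  by (simp add: vec_eq_iff matrix_matrix_mult_def sum_distrib_left algebra_simps)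
lemma msc_mmult_right: "msc c (A ** B) = msc c A ** B"
  by (simp add: vec_eq_iff matrix_matrix_mult_def sum_distrib_left algebra_simps)

lemma ssc_app[simp]: "ssc c s I J = msc c (s I J)" by (simp add: ssc_def)




lemma mm_addL: "(A + B) ** C = A ** C + B ** C"
  by (simp add: vec_eq_iff matrix_matrix_mult_def sum.distrib algebra_simps)
lemma mm_addR: "C ** (A + B) = C ** A + C ** B"
  by (simp add: vec_eq_iff matrix_matrix_mult_def sum.distrib algebra_simps)
lemma mm_diffL: "((A::complex^_^_) - B) ** C = A ** C - B ** C"
  by (simp add: vec_eq_iff matrix_matrix_mult_def sum_subtractf left_diff_distrib)
lemma mm_diffR: "C ** ((A::complex^_^_) - B) = C ** A - C ** B"
  by (simp add: vec_eq_iff matrix_matrix_mult_def sum_subtractf right_diff_distrib)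
lemma mm_sumL: "(sum F S) ** C = sum (\<lambda>x. F x ** C) S"
  by (induction S rule: infinite_finite_induct) (auto simp: mm_addL)
lemma mm_sumR: "C ** (sum F S) = sum (\<lambda>x. C ** F x) S"
  by (induction S rule: infinite_finite_induct) (auto simp: mm_addR)
lemma mm_0L[simp]: "(0::'a::semiring_1^'n^'m) ** C = 0"
  by (simp add: vec_eq_iff matrix_matrix_mult_def)
lemma mm_0R[simp]: "C ** (0::'a::semiring_1^'n^'m) = 0"
  by (simp add: vec_eq_iff matrix_matrix_mult_def)
lemma mm_uminusL: "(- (A::complex^_^_)) ** C = - (A ** C)"
  by (simp add: vec_eq_iff matrix_matrix_mult_def sum_negf[symmetric])
lemma mm_uminusR: "C ** (- (A::complex^_^_)) = - (C ** A)"
  by (simp add: vec_eq_iff matrix_matrix_mult_def sum_negf[symmetric])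
lemma msc_mm1: "A ** msc c B = msc c (A ** B)"
  by (simp add: vec_eq_iff matrix_matrix_mult_def sum_distrib_left algebra_simps)
lemma msc_mm2: "msc c A ** B = msc c (A ** B)"
  by (simp add: vec_eq_iff matrix_matrix_mult_def sum_distrib_left algebra_simps)
lemma msc_pos: "0 < n \<Longrightarrow> msc (of_nat n) A = msc (of_nat n - 1) A + A"
  by (simp add: vec_eq_iff algebra_simps)
lemma msc_1p: "msc (1 + c) A = msc c A + A"
  by (simp add: vec_eq_iff algebra_simps)

lemmas msc_lin = msc_addR msc_diffR msc_sumR msc_uminus msc_msc

lemma s_mx_add[simp]: "s_mx i (a + b) = s_mx i a + s_mx i b"
  and s_mx_diff[simp]: "s_mx i (a - b) = s_mx i a - s_mx i b"
  and s_mx_sum[simp]: "s_mx i (sum F S) = (\<Sum>x\<in>S. s_mx i (F x))"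
  and s_mx_ssc[simp]: "s_mx i (ssc c a) = ssc c (s_mx i a)"
  and s_mx_zero[simp]: "s_mx i 0 = 0"
  and s_mx_uminus[simp]: "s_mx i (- a) = - s_mx i a"
  by (auto simp: s_mx_def fun_eq_iff sum_app ssc_def)

lemma s_mxi_add[simp]: "s_mxi i (a + b) = s_mxi i a + s_mxi i b"
  and s_mxi_diff[simp]: "s_mxi i (a - b) = s_mxi i a - s_mxi i b"
  and s_mxi_sum[simp]: "s_mxi i (sum F S) = (\<Sum>x\<in>S. s_mxi i (F x))"
  and s_mxi_ssc[simp]: "s_mxi i (ssc c a) = ssc c (s_mxi i a)"
  and s_mxi_zero[simp]: "s_mxi i 0 = 0"
  and s_mxi_uminus[simp]: "s_mxi i (- a) = - s_mxi i a"
  by (auto simp: s_mxi_def fun_eq_iff sum_app ssc_def)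

lemma s_dx_add[simp]: "s_dx i (a + b) = s_dx i a + s_dx i b"
  and s_dx_diff[simp]: "s_dx i (a - b) = s_dx i a - s_dx i b"
  and s_dx_sum[simp]: "s_dx i (sum F S) = (\<Sum>x\<in>S. s_dx i (F x))"
  and s_dx_ssc[simp]: "s_dx i (ssc c a) = ssc c (s_dx i a)"
  and s_dx_zero[simp]: "s_dx i 0 = 0"
  and s_dx_uminus[simp]: "s_dx i (- a) = - s_dx i a"
  by (auto simp: s_dx_def fun_eq_iff sum_app ssc_def msc_lin mult.commute)

lemma s_dxi_add[simp]: "s_dxi i (a + b) = s_dxi i a + s_dxi i b"
  and s_dxi_diff[simp]: "s_dxi i (a - b) = s_dxi i a - s_dxi i b"
  and s_dxi_sum[simp]: "s_dxi i (sum F S) = (\<Sum>x\<in>S. s_dxi i (F x))"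
  and s_dxi_ssc[simp]: "s_dxi i (ssc c a) = ssc c (s_dxi i a)"
  and s_dxi_zero[simp]: "s_dxi i 0 = 0"
  and s_dxi_uminus[simp]: "s_dxi i (- a) = - s_dxi i a"
  by (auto simp: s_dxi_def fun_eq_iff sum_app ssc_def msc_lin mult.commute)

lemma s_hom_add[simp]: "s_hom p q i j (a + b) = s_hom p q i j a + s_hom p q i j b"
  and s_hom_diff[simp]: "s_hom p q i j (a - b) = s_hom p q i j a - s_hom p q i j b"
  and s_hom_sum[simp]: "s_hom p q i j (sum F S) = (\<Sum>x\<in>S. s_hom p q i j (F x))"
  and s_hom_ssc[simp]: "s_hom p q i j (ssc c a) = ssc c (s_hom p q i j a)"
  and s_hom_zero[simp]: "s_hom p q i j 0 = 0"
  and s_hom_uminus[simp]: "s_hom p q i j (- a) = - s_hom p q i j a"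
  by (auto simp: s_hom_def fun_eq_iff sum_app ssc_def mm_addL mm_addR mm_diffL mm_diffR
      mm_sumL mm_sumR sum_subtractf msc_diffR msc_mm1 msc_mm2 mm_uminusL mm_uminusR)

lemma s_rho_add[simp]: "s_rho p i j (a + b) = s_rho p i j a + s_rho p i j b"
  and s_rho_diff[simp]: "s_rho p i j (a - b) = s_rho p i j a - s_rho p i j b"
  and s_rho_sum[simp]: "s_rho p i j (sum F S) = (\<Sum>x\<in>S. s_rho p i j (F x))"
  and s_rho_ssc[simp]: "s_rho p i j (ssc c a) = ssc c (s_rho p i j a)"
  and s_rho_zero[simp]: "s_rho p i j 0 = 0"
  and s_rho_uminus[simp]: "s_rho p i j (- a) = - s_rho p i j a"
  by (auto simp: s_rho_def fun_eq_iff sum_app ssc_def mm_addL mm_diffL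
      mm_sumL sum_negf msc_uminus msc_mm2 mm_uminusL)

lemma ssc_add[simp]: "ssc c (a + b) = ssc c a + ssc c b"
  and ssc_diff[simp]: "ssc c (a - b) = ssc c a - ssc c b"
  and ssc_sum[simp]: "ssc c (sum F S) = (\<Sum>x\<in>S. ssc c (F x))"
  and ssc_zero[simp]: "ssc c 0 = 0"
  and ssc_uminus[simp]: "ssc c (- a) = - ssc c a"
  and ssc_ssc[simp]: "ssc c (ssc d a) = ssc (c * d) a"
  by (auto simp: fun_eq_iff sum_app ssc_def msc_lin)

lemma msc_of_nat_Suc: "msc (of_nat (Suc n)) A = msc (of_nat n) A + A"
  by (simp add: vec_eq_iff algebra_simps)

lemma c_dx_mx: "s_dx i (s_mx j t) = s_mx j (s_dx i t) + (if i = j then t else 0)"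
  by (auto simp: s_dx_def s_mx_def fun_eq_iff fun_upd_twist msc_1p msc_pos)

lemma c_dxi_mxi: "s_dxi i (s_mxi j t) = s_mxi j (s_dxi i t) + (if i = j then t else 0)"
  by (auto simp: s_dxi_def s_mxi_def fun_eq_iff fun_upd_twist msc_1p msc_pos)

lemma c_dx_mxi: "s_dx i (s_mxi j t) = s_mxi j (s_dx i t)"
  by (auto simp: s_dx_def s_mxi_def fun_eq_iff)
lemma c_dxi_mx: "s_dxi i (s_mx j t) = s_mx j (s_dxi i t)"
  by (auto simp: s_dxi_def s_mx_def fun_eq_iff)
lemma c_mxi_mx: "s_mxi i (s_mx j t) = s_mx j (s_mxi i t)"
  by (auto simp: s_mxi_def s_mx_def fun_eq_iff)
lemma c_dxi_dx: "s_dxi i (s_dx j t) = s_dx j (s_dxi i t)"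
  by (auto simp: s_dxi_def s_dx_def fun_eq_iff msc_msc mult.commute)
lemma c_dx_dx: "s_dx i (s_dx j t) = s_dx j (s_dx i t)"
  by (cases "i = j") (auto simp: s_dx_def fun_eq_iff msc_msc mult.commute fun_upd_twist)
lemma c_dxi_dxi: "s_dxi i (s_dxi j t) = s_dxi j (s_dxi i t)"
  by (cases "i = j") (auto simp: s_dxi_def fun_eq_iff msc_msc mult.commute fun_upd_twist)
lemma c_mx_mx: "s_mx i (s_mx j t) = s_mx j (s_mx i t)"
  by (cases "i = j") (auto simp: s_mx_def fun_eq_iff fun_upd_twist)
lemma c_mxi_mxi: "s_mxi i (s_mxi j t) = s_mxi j (s_mxi i t)"
  by (cases "i = j") (auto simp: s_mxi_def fun_eq_iff fun_upd_twist)

lemma c_hom_mx: "s_hom p q a b (s_mx j t) = s_mx j (s_hom p q a b t)"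
  by (auto simp: s_hom_def s_mx_def fun_eq_iff)
lemma c_hom_mxi: "s_hom p q a b (s_mxi j t) = s_mxi j (s_hom p q a b t)"
  by (auto simp: s_hom_def s_mxi_def fun_eq_iff)
lemma c_hom_dx: "s_hom p q a b (s_dx j t) = s_dx j (s_hom p q a b t)"
  by (auto simp: s_hom_def s_dx_def fun_eq_iff msc_mm1 msc_mm2 msc_diffR)
lemma c_hom_dxi: "s_hom p q a b (s_dxi j t) = s_dxi j (s_hom p q a b t)"
  by (auto simp: s_hom_def s_dxi_def fun_eq_iff msc_mm1 msc_mm2 msc_diffR)

lemmas comm_rules = c_dx_mx c_dxi_mxi c_dx_mxi c_dxi_mx c_mxi_mx c_dxi_dx
  c_hom_mx c_hom_mxi c_hom_dx c_hom_dxi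




lemma finite_le_mi: "finite {A::'m::finite mi. A \<le> I}"
proof -
  have "{A::'m mi. A \<le> I} \<subseteq> PiE UNIV (\<lambda>r. {..I r})"
    by (auto simp: le_fun_def PiE_def Pi_def extensional_def)
  moreover have "finite (PiE UNIV (\<lambda>r. {..I r}))" by (rule finite_PiE) auto
  ultimately show ?thesis by (rule finite_subset)
qed

definition sshift :: "'m mi \<Rightarrow> ('m::finite,'n::finite,'k::finite) sym \<Rightarrow> ('m,'n,'k) sym" where
  "sshift A s = (\<lambda>I J. if A \<le> I then s (\<lambda>r. I r - A r) J else 0)"

lemma msc_if01: "msc (if c then x else 0) A = (if c then msc x A else 0)" by simp

lemma s_pmul_single: "s_pmul (\<lambda>I. if I = B then c else 0) s = ssc c (sshift B s)"
proof -
  have "\<And>I J. (\<Sum>A\<in>{A. A \<le> I}. msc (if A = B then c else 0) (s (\<lambda>r. I r - A r) J))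
     = (if B \<le> I then msc c (s (\<lambda>r. I r - B r) J) else 0)"
    by (simp add: msc_if01 sum.delta[OF finite_le_mi])
  then show ?thesis by (simp add: s_pmul_def sshift_def fun_eq_iff)
qed

lemma s_pmul_mono: "s_pmul (mono B) s = sshift B s"
  using s_pmul_single[of B 1 s] by (simp add: mono_def ssc_def)

lemma s_pmul_zero[simp]: "s_pmul (\<lambda>_. 0) s = 0"
  by (simp add: s_pmul_def fun_eq_iff)

lemma unitv_same[simp]: "unitv i i = 1" by (simp add: unitv_def)
lemma unitv_other[simp]: "i \<noteq> j \<Longrightarrow> unitv i j = 0" by (simp add: unitv_def)
lemma unitv_other2[simp]: "j \<noteq> i \<Longrightarrow> unitv i j = 0" by (simp add: unitv_def)
lemma s_pmul_if: "s_pmul (if c then p1 else p2) t = (if c then s_pmul p1 t else s_pmul p2 t)" by simp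
lemma pd_if: "pd a (if c then p1 else p2) = (if c then pd a p1 else pd a p2)" by simp

lemma unitv_le: "unitv i \<le> I \<longleftrightarrow> 0 < I i"
  by (auto simp: le_fun_def unitv_def)

lemma s_mx_sshift: "s_mx i s = sshift (unitv i) s"
proof -
  have e: "\<And>I. I(i := I i - 1) = (\<lambda>r. I r - unitv i r)" by (auto simp: unitv_def fun_eq_iff)
  show ?thesis unfolding s_mx_def sshift_def unitv_le e ..
qed

lemma sshift_0: "sshift (\<lambda>_. 0) s = s"
  by (simp add: sshift_def fun_eq_iff le_fun_def)

lemma sshift_sshift: "sshift A (sshift B s) = sshift (\<lambda>r. A r + B r) s"
proof -
  have c: "\<And>I. (A \<le> I \<and> B \<le> (\<lambda>r. I r - A r)) = ((\<lambda>r. A r + B r) \<le> I)"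
  proof -
    fix I
    have "\<forall>x. (A x \<le> I x \<and> B x \<le> I x - A x) = (A x + B x \<le> I x)" by auto
    then show "(A \<le> I \<and> B \<le> (\<lambda>r. I r - A r)) = ((\<lambda>r. A r + B r) \<le> I)"
      unfolding le_fun_def by blast
  qed
  have e: "\<And>I. (\<lambda>r. I r - A r - B r) = (\<lambda>r. I r - (A r + B r))" by (simp add: diff_diff_add)
  show ?thesis unfolding sshift_def fun_eq_iff using c e by (auto simp: diff_diff_add)
qed

lemma pd_mono: "pd a (mono A) = (\<lambda>I. if I = A(a := A a - 1) \<and> 0 < A a then of_nat (A a) else 0)"
proof -
  have "\<And>I. (I(a := I a + 1) = A) = (I = A(a := A a - 1) \<and> 0 < A a)"
    by (auto simp: fun_eq_iff split: if_splits)
  then show ?thesis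
    by (auto simp: pd_def mono_def fun_eq_iff)
qed

lemma pd_zero[simp]: "pd a (\<lambda>_. 0) = (\<lambda>_. 0)" by (simp add: pd_def)
lemma pd_mono0: "pd a (mono (\<lambda>_. 0)) = (\<lambda>_. 0)" by (simp add: pd_mono)
lemma pd_mono1: "pd a (mono (unitv k)) = (if a = k then mono (\<lambda>_. 0) else (\<lambda>_. 0))"
proof -
  have e: "(unitv k)(k := 0) = (\<lambda>_. 0)" by (auto simp: unitv_def fun_eq_iff)
  show ?thesis unfolding pd_mono by (cases "a = k") (simp_all add: e mono_def cong: if_cong)
qed

lemma s_pmul_pd2: "s_pmul (pd a (mono (\<lambda>r. unitv i r + unitv k r))) t
   = (if a = i then s_mx k t else 0) + (if a = k then s_mx i t else 0)"
proof -
  let ?A = "(\<lambda>r. unitv i r + unitv k r)"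
  consider "a = i" "a = k" | "a = i" "a \<noteq> k" | "a \<noteq> i" "a = k" | "a \<noteq> i" "a \<noteq> k" by blast
  then show ?thesis
  proof cases
    case 1
    have e: "?A(a := ?A a - 1) = unitv a" using 1 by (auto simp: unitv_def fun_eq_iff)
    have X: "pd a (mono ?A) = (\<lambda>I. if I = unitv a then 2 else 0)"
    proof -
      have v: "unitv i a + unitv k a = 2" using 1 by simp
      show ?thesis unfolding pd_mono e using 1 by (simp add: v cong: if_cong)
    qed
    show ?thesis unfolding X s_pmul_single using 1
      by (simp add: s_mx_sshift fun_eq_iff vec_eq_iff ssc_def algebra_simps)
  next
    case 2
    have e: "?A(a := ?A a - 1) = unitv k" using 2 by (auto simp: unitv_def fun_eq_iff)
    have X: "pd a (mono ?A) = (\<lambda>I. if I = unitv k then 1 else 0)"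
      unfolding pd_mono e using 2 by (simp cong: if_cong)
    show ?thesis unfolding X s_pmul_single using 2
      by (simp add: s_mx_sshift fun_eq_iff ssc_def)
  next
    case 3
    have e: "?A(a := ?A a - 1) = unitv i" using 3 by (auto simp: unitv_def fun_eq_iff)
    have X: "pd a (mono ?A) = (\<lambda>I. if I = unitv i then 1 else 0)"
      unfolding pd_mono e using 3 by (simp cong: if_cong)
    show ?thesis unfolding X s_pmul_single using 3
      by (simp add: s_mx_sshift fun_eq_iff ssc_def)
  next
    case 4
    then have "pd a (mono ?A) = (\<lambda>_. 0)" by (simp add: pd_mono)
    then show ?thesis using 4 by simp
  qed
qed

lemma sum_if_c: "(\<Sum>j\<in>S. if c then F j else 0) = (if c then (\<Sum>j\<in>S. F j) else 0)" by simp

lemma LieS_d: "LieS p q (vf_d i) t = s_dx i t"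
  by (simp add: LieS_def vf_d_def s_pmul_if pd_if sum_if_c pd_mono0 s_pmul_mono sshift_0 cong: if_cong)

lemma LieS_xd: "LieS p q (vf_xd i j) t = s_mx i (s_dx j t) - s_mxi j (s_dxi i t) + s_hom p q i j t"
  by (simp add: LieS_def vf_xd_def s_pmul_if pd_if sum_if_c pd_mono1 s_pmul_mono sshift_0 s_mx_sshift cong: if_cong)

lemma LieS_E: "LieS p q vf_E t = (\<Sum>j\<in>UNIV. s_mx j (s_dx j t)) - (\<Sum>a\<in>UNIV. s_mxi a (s_dxi a t))
     + (\<Sum>a\<in>UNIV. s_hom p q a a t)"
  by (simp add: LieS_def vf_E_def s_pmul_if pd_if sum_if_c pd_mono1 s_pmul_mono sshift_0 s_mx_sshift cong: if_cong)

lemma LieS_xE: "LieS p q (vf_xE i) t =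
     (\<Sum>j\<in>UNIV. s_mx i (s_mx j (s_dx j t)))
   - ((\<Sum>j\<in>UNIV. s_mx j (s_mxi j (s_dxi i t))) + (\<Sum>a\<in>UNIV. s_mx i (s_mxi a (s_dxi a t))))
   + ((\<Sum>j\<in>UNIV. s_mx j (s_hom p q i j t)) + (\<Sum>a\<in>UNIV. s_mx i (s_hom p q a a t)))"
  by (simp add: LieS_def vf_xE_def s_pmul_pd2 s_pmul_mono s_mx_sshift sshift_sshift sum.distrib
      s_pmul_if pd_if sum_if_c cong: if_cong)




definition "XXDD s = (\<Sum>i\<in>UNIV. \<Sum>j\<in>UNIV. s_mx i (s_mx j (s_dx j (s_dx i s))))"
definition "XD s = (\<Sum>i\<in>UNIV. s_mx i (s_dx i s))"
definition "XP1 s = (\<Sum>i\<in>UNIV. \<Sum>j\<in>UNIV. s_mx i (s_mxi i (s_dx j (s_dxi j s))))"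
definition "XP2 s = (\<Sum>i\<in>UNIV. \<Sum>j\<in>UNIV. s_mx i (s_mxi j (s_dx i (s_dxi j s))))"
definition "PPDD s = (\<Sum>i\<in>UNIV. \<Sum>j\<in>UNIV. s_mxi i (s_mxi j (s_dxi j (s_dxi i s))))"
definition "PD s = (\<Sum>i\<in>UNIV. s_mxi i (s_dxi i s))"
definition "XDH p q s = (\<Sum>i\<in>UNIV. \<Sum>j\<in>UNIV. s_mx i (s_dx j (s_hom p q j i s)))"
definition "PDH p q s = (\<Sum>i\<in>UNIV. \<Sum>j\<in>UNIV. s_mxi i (s_dxi j (s_hom p q i j s)))"
definition "HE p q s = (\<Sum>a\<in>UNIV. s_hom p q a a s)"
definition "HEHE p q s = (\<Sum>a\<in>UNIV. \<Sum>b\<in>UNIV. s_hom p q a a (s_hom p q b b s))"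
definition "XDHE p q s = (\<Sum>k\<in>UNIV. \<Sum>a\<in>UNIV. s_mx k (s_dx k (s_hom p q a a s)))"
definition "PDHE p q s = (\<Sum>r\<in>UNIV. \<Sum>a\<in>UNIV. s_mxi r (s_dxi r (s_hom p q a a s)))"

lemma XP1_sw: "(\<Sum>i\<in>UNIV. \<Sum>j\<in>UNIV. s_mx j (s_mxi j (s_dx i (s_dxi i s)))) = XP1 s"
  unfolding XP1_def by (rule sum.swap)
lemma PPDD_sw: "(\<Sum>i\<in>UNIV. \<Sum>j\<in>UNIV. s_mxi j (s_mxi i (s_dxi i (s_dxi j s)))) = PPDD s"
  unfolding PPDD_def by (rule sum.swap)
lemma PDH_sw: "(\<Sum>i\<in>UNIV. \<Sum>j\<in>UNIV. s_mxi j (s_dxi i (s_hom p q j i s))) = PDH p q s"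
  unfolding PDH_def by (rule sum.swap)
lemma XDH_sw: "(\<Sum>i\<in>UNIV. \<Sum>j\<in>UNIV. s_mx j (s_dx i (s_hom p q i j s))) = XDH p q s"
  unfolding XDH_def by (rule sum.swap)

lemma XP2_sw: "(\<Sum>i\<in>UNIV. \<Sum>j\<in>UNIV. s_mx j (s_mxi i (s_dx j (s_dxi i s)))) = XP2 s"
  unfolding XP2_def by (rule sum.swap)
lemma XDHE_sw: "(\<Sum>i\<in>UNIV. \<Sum>j\<in>UNIV. s_mx j (s_dx j (s_hom p q i i s))) = XDHE p q s"
  unfolding XDHE_def by (rule sum.swap)
lemma PDHE_sw: "(\<Sum>i\<in>UNIV. \<Sum>j\<in>UNIV. s_mxi j (s_dxi j (s_hom p q i i s))) = PDHE p q s"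
  unfolding PDHE_def by (rule sum.swap)
lemma XXDD_alt: "(\<Sum>i\<in>UNIV. \<Sum>j\<in>UNIV. s_mx i (s_mx j (s_dx i (s_dx j s)))) = XXDD s"
  unfolding XXDD_def by (simp add: c_dx_dx[of i j for i j])
lemma PPDD_alt: "(\<Sum>i\<in>UNIV. \<Sum>j\<in>UNIV. s_mxi i (s_mxi j (s_dxi i (s_dxi j s)))) = PPDD s"
  unfolding PPDD_def by (simp add: c_dxi_dxi[of i j for i j])

lemmas fold_atoms1 = XD_def[symmetric] PD_def[symmetric] HE_def[symmetric]
lemmas fold_atoms = XXDD_def[symmetric] XP1_def[symmetric] XP2_def[symmetric]
  PPDD_def[symmetric] XDH_def[symmetric] PDH_def[symmetric]
  HEHE_def[symmetric] XDHE_def[symmetric] PDHE_def[symmetric] homOmega_def[symmetric]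
  XP1_sw PPDD_sw PDH_sw XDH_sw XP2_sw XDHE_sw PDHE_sw XXDD_alt PPDD_alt
  sum_distrib_left[symmetric] ssc_sum[symmetric]

context fixes s :: "('m::finite,'n::finite,'k::finite) sym"
begin

lemma T1: "(\<Sum>i\<in>UNIV. \<Sum>j\<in>UNIV. LieS p q (vf_xd i j) (LieS p q (vf_xd j i) s)) =
  XXDD s + of_nat CARD('m) * XD s - 2 * XP1 s + 2 * XDH p q s + PPDD s + of_nat CARD('m) * PD s
  - 2 * PDH p q s + homOmega p q s"
  apply (simp add: LieS_xd comm_rules sum.distrib sum_subtractf)
  apply (simp only: fold_atoms)
  apply (simp only: fold_atoms1)
  apply (simp add: algebra_simps)
  done

lemma T2: "LieS p q vf_E (LieS p q vf_E s - ssc (of_nat (CARD('m) + 1)) s) = 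
   XXDD s + XD s - XP2 s + XDHE p q s - ssc (1 + of_nat CARD('m)) (XD s)
   - (XP2 s - (PPDD s + PD s) + PDHE p q s - ssc (1 + of_nat CARD('m)) (PD s))
   + (XDHE p q s - PDHE p q s + HEHE p q s - ssc (1 + of_nat CARD('m)) (HE p q s))"
  apply (simp add: LieS_E comm_rules sum.distrib sum_subtractf)
  apply (simp only: fold_atoms)
  apply (simp only: fold_atoms1)
  apply (simp add: algebra_simps)
  done

lemma T3: "(\<Sum>i\<in>UNIV. LieS p q (vf_xE i) (LieS p q (vf_d i) s)) =
   XXDD s - (XP1 s + XP2 s) + (XDH p q s + XDHE p q s)"
  apply (simp add: LieS_xE LieS_d comm_rules sum.distrib sum_subtractf)
  apply (simp only: fold_atoms)
  done

lemma TR: "homOmega \<phi> \<phi>' s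
             - ssc 2 (\<Sum>i\<in>UNIV. \<Sum>j\<in>UNIV. s_hom \<phi> \<phi>' i j (s_mxi i (s_dxi j s)))
             + homE \<phi> \<phi>' (homE \<phi> \<phi>' s - ssc 2 (Exi s) - ssc (of_nat (CARD('m) + 1)) s)
             + ssc 2 (Exi (Exi s + ssc (of_nat CARD('m)) s)) =
   homOmega \<phi> \<phi>' s - ssc 2 (PDH \<phi> \<phi>' s) + (HEHE \<phi> \<phi>' s - ssc 2 (PDHE \<phi> \<phi>' s)
    - ssc (1 + of_nat CARD('m)) (HE \<phi> \<phi>' s)) + (ssc 2 (PPDD s) + ssc 2 (PD s) + ssc (2 * of_nat CARD('m)) (PD s))"
  apply (simp add: homE_def Exi_def comm_rules sum.distrib sum_subtractf)
  apply (simp only: fold_atoms)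
  apply (simp only: fold_atoms1)
  done

lemma part1: "OmegaA (LieS p q) s =
             homOmega p q s
             - ssc 2 (\<Sum>i\<in>UNIV. \<Sum>j\<in>UNIV. s_hom p q i j (s_mxi i (s_dxi j s)))
             + homE p q (homE p q s - ssc 2 (Exi s) - ssc (of_nat (CARD('m) + 1)) s)
             + ssc 2 (Exi (Exi s + ssc (of_nat CARD('m)) s))"
  unfolding OmegaA_def T1 T2 T3 TR
  by (simp add: fun_eq_iff vec_eq_iff algebra_simps of_nat_index)

end



definition fphi :: "complex^'n^'k \<Rightarrow> ('m mi \<Rightarrow> complex^'n) \<Rightarrow> ('m mi \<Rightarrow> complex^'k)" where
  "fphi M f = (\<lambda>K. M *v f K)"
definition fsc :: "complex \<Rightarrow> ('m mi \<Rightarrow> complex^'n) \<Rightarrow> ('m mi \<Rightarrow> complex^'n)" where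
  "fsc c f = (\<lambda>K. c *s f K)"

lemma fsc_app[simp]: "fsc c f K = c *s f K" by (simp add: fsc_def)
lemma fphi_app[simp]: "fphi M f K = M *v f K" by (simp add: fphi_def)

lemma mv_add: "M *v (a + b) = M *v a + M *v b" by (simp add: matrix_vector_right_distrib)
lemma mv_diff: "(M::complex^_^_) *v (a - b) = M *v a - M *v b" by (simp add: matrix_vector_mult_diff_distrib)
lemma mv_sum: "(M::complex^_^_) *v (sum F S) = (\<Sum>x\<in>S. M *v F x)"
  by (induction S rule: infinite_finite_induct) (auto simp: mv_add)
lemma mv_smult: "(M::complex^_^_) *v (c *s v) = c *s (M *v v)"
  by (simp add: vec_eq_iff matrix_vector_mult_def sum_distrib_left algebra_simps)
lemma mv_uminus: "(M::complex^_^_) *v (- v) = - (M *v v)"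
  by (simp add: vec_eq_iff matrix_vector_mult_def sum_negf[symmetric])
lemma smult_sum: "(c::complex) *s (sum F S) = (\<Sum>x\<in>S. c *s F x)"
  by (simp add: vec_eq_iff sum_component sum_distrib_left)
lemma mvL_add: "(A + B) *v v = A *v v + B *v v"
  by (simp add: vec_eq_iff matrix_vector_mult_def sum.distrib algebra_simps)
lemma mvL_diff: "((A::complex^_^_) - B) *v v = A *v v - B *v v"
  by (simp add: vec_eq_iff matrix_vector_mult_def sum_subtractf left_diff_distrib)
lemma mvL_zero[simp]: "(0::complex^'n^'k) *v v = 0"
  by (simp add: vec_eq_iff matrix_vector_mult_def)
lemma mvL_msc: "msc c A *v v = c *s (A *v v)"
  by (simp add: vec_eq_iff matrix_vector_mult_def sum_distrib_left algebra_simps)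
lemma mvL_uminus: "(- (A::complex^_^_)) *v v = - (A *v v)"
  by (simp add: vec_eq_iff matrix_vector_mult_def sum_negf[symmetric])

lemmas vlin = mv_add mv_diff mv_sum mv_smult mv_uminus smult_sum vector_ssub_ldistrib
  vector_smult_rneg vector_smult_assoc

lemma mpow_add[simp]: "mpow A (f + g) = mpow A f + mpow A g"
  and mpow_diff[simp]: "mpow A (f - g) = mpow A f - mpow A g"
  and mpow_sum[simp]: "mpow A (sum F S) = (\<Sum>x\<in>S. mpow A (F x))"
  and mpow_fsc[simp]: "mpow A (fsc c f) = fsc c (mpow A f)"
  and mpow_zero[simp]: "mpow A 0 = 0"
  and mpow_uminus[simp]: "mpow A (- f) = - mpow A f"
  and mpow_fphi[simp]: "mpow A (fphi M f) = fphi M (mpow A f)"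
  by (auto simp: mpow_def fun_eq_iff sum_app)

lemma dpow_add[simp]: "dpow A (f + g) = dpow A f + dpow A g"
  and dpow_diff[simp]: "dpow A (f - g) = dpow A f - dpow A g"
  and dpow_sum[simp]: "dpow A (sum F S) = (\<Sum>x\<in>S. dpow A (F x))"
  and dpow_fsc[simp]: "dpow A (fsc c f) = fsc c (dpow A f)"
  and dpow_zero[simp]: "dpow A 0 = 0"
  and dpow_uminus[simp]: "dpow A (- f) = - dpow A f"
  and dpow_fphi[simp]: "dpow A (fphi M f) = fphi M (dpow A f)"
  by (auto simp: dpow_def fun_eq_iff sum_app vector_add_ldistrib vector_ssub_ldistrib smult_sum
      vector_smult_assoc mult.commute mv_smult)

lemma f_dx_add[simp]: "f_dx j (f + g) = f_dx j f + f_dx j g"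
  and f_dx_diff[simp]: "f_dx j (f - g) = f_dx j f - f_dx j g"
  and f_dx_sum[simp]: "f_dx j (sum F S) = (\<Sum>x\<in>S. f_dx j (F x))"
  and f_dx_fsc[simp]: "f_dx j (fsc c f) = fsc c (f_dx j f)"
  and f_dx_zero[simp]: "f_dx j 0 = 0"
  and f_dx_uminus[simp]: "f_dx j (- f) = - f_dx j f"
  and f_dx_fphi[simp]: "f_dx j (fphi M f) = fphi M (f_dx j f)"
  by (auto simp: f_dx_def fun_eq_iff sum_app vector_add_ldistrib vector_ssub_ldistrib smult_sum
      vector_smult_assoc mult.commute mv_smult vector_sadd_rdistrib mv_add distrib_left)

lemma fphi_add[simp]: "fphi M (f + g) = fphi M f + fphi M g"
  and fphi_diff[simp]: "fphi (M::complex^_^_) (f - g) = fphi M f - fphi M g"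
  and fphi_sum[simp]: "fphi (M::complex^_^_) (sum F S) = (\<Sum>x\<in>S. fphi M (F x))"
  and fphi_fsc[simp]: "fphi (M::complex^_^_) (fsc c f) = fsc c (fphi M f)"
  and fphi_zero[simp]: "fphi M 0 = 0"
  and fphi_uminus[simp]: "fphi (M::complex^_^_) (- f) = - fphi M f"
  by (auto simp: fphi_def fun_eq_iff sum_app mv_add mv_diff mv_sum mv_smult mv_uminus)

lemma fphi_fphi: "fphi M (fphi N f) = fphi (M ** N) f"
  by (simp add: fphi_def matrix_vector_mul_assoc)

lemma f_pmul_single: "f_pmul (\<lambda>I. if I = B then c else 0) f = fsc c (mpow B f)"
proof -
  have "\<And>K. (\<Sum>A\<in>{A. A \<le> K}. (if A = B then c else 0) *s f (\<lambda>r. K r - A r))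
     = (if B \<le> K then c *s f (\<lambda>r. K r - B r) else 0)"
    by (simp add: if_distrib[of "\<lambda>x. x *s _"] sum.delta[OF finite_le_mi] cong: if_cong)
  then show ?thesis by (simp add: f_pmul_def mpow_def fun_eq_iff)
qed

lemma f_pmul_mono: "f_pmul (mono B) f = mpow B f"
  using f_pmul_single[of B 1 f] by (simp add: mono_def fsc_def)

lemma f_pmul_zero[simp]: "f_pmul (\<lambda>_. 0) f = 0"
  by (simp add: f_pmul_def fun_eq_iff)

lemma mpow_0: "mpow (\<lambda>_. 0) f = f"
  by (simp add: mpow_def fun_eq_iff le_fun_def)

lemma mpow_mpow: "mpow A (mpow B s) = mpow (\<lambda>r. A r + B r) s"
proof -
  have c: "\<And>I. (A \<le> I \<and> B \<le> (\<lambda>r. I r - A r)) = ((\<lambda>r. A r + B r) \<le> I)"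
  proof -
    fix I
    have "\<forall>x. (A x \<le> I x \<and> B x \<le> I x - A x) = (A x + B x \<le> I x)" by auto
    then show "(A \<le> I \<and> B \<le> (\<lambda>r. I r - A r)) = ((\<lambda>r. A r + B r) \<le> I)"
      unfolding le_fun_def by blast
  qed
  show ?thesis unfolding mpow_def fun_eq_iff using c by (auto simp: diff_diff_add)
qed

lemma f_pmul_pd2: "f_pmul (pd a (mono (\<lambda>r. unitv i r + unitv k r))) t
   = (if a = i then mpow (unitv k) t else 0) + (if a = k then mpow (unitv i) t else 0)"
proof -
  let ?A = "(\<lambda>r. unitv i r + unitv k r)"
  consider "a = i" "a = k" | "a = i" "a \<noteq> k" | "a \<noteq> i" "a = k" | "a \<noteq> i" "a \<noteq> k" by blast
  then show ?thesis
  proof cases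
    case 1
    have e: "?A(a := ?A a - 1) = unitv a" using 1 by (auto simp: unitv_def fun_eq_iff)
    have X: "pd a (mono ?A) = (\<lambda>I. if I = unitv a then 2 else 0)"
    proof -
      have v: "unitv i a + unitv k a = 2" using 1 by simp
      show ?thesis unfolding pd_mono e using 1 by (simp add: v cong: if_cong)
    qed
    show ?thesis unfolding X f_pmul_single using 1
      by (simp add: fun_eq_iff vec_eq_iff algebra_simps)
  next
    case 2
    have e: "?A(a := ?A a - 1) = unitv k" using 2 by (auto simp: unitv_def fun_eq_iff)
    have X: "pd a (mono ?A) = (\<lambda>I. if I = unitv k then 1 else 0)"
      unfolding pd_mono e using 2 by (simp cong: if_cong)
    show ?thesis unfolding X f_pmul_single using 2
      by (simp add: fun_eq_iff)
  next
    case 3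
    have e: "?A(a := ?A a - 1) = unitv i" using 3 by (auto simp: unitv_def fun_eq_iff)
    have X: "pd a (mono ?A) = (\<lambda>I. if I = unitv i then 1 else 0)"
      unfolding pd_mono e using 3 by (simp cong: if_cong)
    show ?thesis unfolding X f_pmul_single using 3
      by (simp add: fun_eq_iff)
  next
    case 4
    then have "pd a (mono ?A) = (\<lambda>_. 0)" by (simp add: pd_mono)
    then show ?thesis using 4 by simp
  qed
qed

lemma f_pmul_if: "f_pmul (if c then p1 else p2) t = (if c then f_pmul p1 t else f_pmul p2 t)" by simp

lemma f_pmul_phi: "f_pmul p (\<lambda>K. M *v f K) = f_pmul p (fphi M f)" by (simp add: fphi_def)

lemma LieF_d: "LieF p (vf_d i) f = f_dx i f"
  by (simp add: LieF_def vf_d_def f_pmul_if pd_if sum_if_c pd_mono0 f_pmul_mono mpow_0 cong: if_cong)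

lemma LieF_xd: "LieF p (vf_xd i j) f = mpow (unitv i) (f_dx j f) + fphi (p i j) f"
  by (simp add: LieF_def vf_xd_def f_pmul_if pd_if sum_if_c pd_mono1 f_pmul_mono mpow_0 f_pmul_phi
       cong: if_cong)

lemma LieF_E: "LieF p vf_E f = (\<Sum>j\<in>UNIV. mpow (unitv j) (f_dx j f)) + (\<Sum>a\<in>UNIV. fphi (p a a) f)"
  by (simp add: LieF_def vf_E_def f_pmul_if pd_if sum_if_c pd_mono1 f_pmul_mono mpow_0 f_pmul_phi
       cong: if_cong)

lemma LieF_xE: "LieF p (vf_xE i) f =
     (\<Sum>j\<in>UNIV. mpow (unitv i) (mpow (unitv j) (f_dx j f)))
   + ((\<Sum>j\<in>UNIV. mpow (unitv j) (fphi (p i j) f)) + (\<Sum>a\<in>UNIV. mpow (unitv i) (fphi (p a a) f)))"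
  by (simp add: LieF_def vf_xE_def f_pmul_pd2 f_pmul_mono mpow_mpow sum.distrib f_pmul_phi
      f_pmul_if sum_if_c cong: if_cong)




definition fr :: "nat \<Rightarrow> nat \<Rightarrow> nat" where "fr a b = fact (a + b) div fact a"

lemma fr_mult: "fr a b * fact a = fact (a + b)"
  unfolding fr_def by (simp add: fact_dvd)

lemma fr_0[simp]: "fr a 0 = 1" by (simp add: fr_def)
lemma fr_Suc: "fr a (Suc b) = (a + b + 1) * fr a b"
proof -
  have "fr a (Suc b) * fact a = fact (a + Suc b)" by (rule fr_mult)
  also have "\<dots> = (a + b + 1) * fact (a + b)" by simp
  also have "\<dots> = (a + b + 1) * (fr a b * fact a)" by (simp only: fr_mult)
  finally have "fr a (Suc b) * fact a = ((a + b + 1) * fr a b) * fact a" by (simp only: mult.assoc)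
  then show ?thesis by simp
qed

lemma fr_split: "fr (Suc a) (Suc b) = fr a (Suc b) + Suc b * fr (Suc a) b"
proof -
  have "fr (Suc a) (Suc b) * fact (Suc a) = (fr a (Suc b) + Suc b * fr (Suc a) b) * fact (Suc a)"
  proof -
    have 1: "fr (Suc a) (Suc b) * fact (Suc a) = fact (Suc a + Suc b)" by (rule fr_mult)
    have 2: "fr a (Suc b) * fact (Suc a) = Suc a * fact (a + Suc b)"
    proof -
      have "fr a (Suc b) * fact (Suc a) = Suc a * (fr a (Suc b) * fact a)" by (simp only: fact_Suc) (simp add: algebra_simps)
      then show ?thesis by (simp only: fr_mult)
    qed
    have 3: "Suc b * fr (Suc a) b * fact (Suc a) = Suc b * fact (Suc a + b)"
      using fr_mult[of "Suc a" b] by (simp del: fact_Suc add: algebra_simps)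
    have "fact (Suc a + Suc b) = (Suc a + Suc b) * (fact (a + Suc b) :: nat)" by simp
    then show ?thesis using 1 2 3 by (simp add: algebra_simps)
  qed
  then show ?thesis by simp
qed

lemma fr_id: "(if 0 < a + b then fr a b else 0) = (if 0 < a then fr (a - 1) b else 0) + b * fr a (b - 1)"
proof (cases a)
  case 0
  then show ?thesis by (cases b) (simp_all add: fr_def)
next
  case (Suc a')
  then show ?thesis by (cases b) (simp_all add: fr_split)
qed

definition cc :: "'m::finite mi \<Rightarrow> 'm mi \<Rightarrow> nat" where
  "cc L J = (\<Prod>r\<in>UNIV. fact (L r + J r) div fact (L r))"

lemma dpow_cc: "dpow J f = (\<lambda>L. of_nat (cc L J) *s f (\<lambda>r. L r + J r))"
  by (simp add: dpow_def cc_def fun_eq_iff)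

lemma cc_at: "cc L J = fr (L j) (J j) * (\<Prod>r\<in>UNIV-{j}. fr (L r) (J r))"
  unfolding cc_def fr_def by (simp add: prod.remove[of UNIV j])

lemma prod_rest_updL: "(\<Prod>r\<in>UNIV-{j}. fr ((L(j:=x)) r) (J r)) = (\<Prod>r\<in>UNIV-{j}. fr (L r) (J r))"
  by (rule prod.cong) auto
lemma prod_rest_updJ: "(\<Prod>r\<in>UNIV-{j}. fr (L r) ((J(j:=x)) r)) = (\<Prod>r\<in>UNIV-{j}. fr (L r) (J r))"
  by (rule prod.cong) auto

lemma cc_updJ: "cc L (J(j := Suc (J j))) = (L j + J j + 1) * cc L J"
  using cc_at[of L "J(j := Suc (J j))" j] cc_at[of L J j] prod_rest_updJ[of L J j]
  by (simp add: fr_Suc algebra_simps)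

lemma mpow1: "mpow (unitv i) g = (\<lambda>K. if 0 < K i then g (K(i := K i - 1)) else 0)"
proof -
  have e: "\<And>I. I(i := I i - 1) = (\<lambda>r. I r - unitv i r)" by (auto simp: unitv_def fun_eq_iff)
  show ?thesis unfolding mpow_def unitv_le e ..
qed

lemma D1: "dpow J (f_dx j h) = dpow (J(j := Suc (J j))) h"
proof -
  have e: "\<And>L. (\<lambda>r. L r + J r)(j := Suc (L j + J j)) = (\<lambda>r. L r + (J(j := Suc (J j))) r)"
    by (auto simp: fun_eq_iff)
  show ?thesis
    by (simp add: dpow_cc f_dx_def fun_eq_iff e cc_updJ vector_smult_assoc algebra_simps)
qed

lemma D2: "dpow J (mpow (unitv j) h) = mpow (unitv j) (dpow J h) + fsc (of_nat (J j)) (dpow (J(j := J j - 1)) h)"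
proof (rule ext)
  fix L
  let ?R = "(\<Prod>r\<in>UNIV-{j}. fr (L r) (J r))"
  let ?N = "(\<lambda>r. L r + J r)(j := L j + J j - 1)"
  have c1: "cc L J = fr (L j) (J j) * ?R" by (rule cc_at)
  have c2: "cc (L(j := L j - 1)) J = fr (L j - 1) (J j) * ?R"
    using cc_at[of "L(j := L j - 1)" J j] prod_rest_updL[where j=j and L=L and J=J] by simp
  have c3: "cc L (J(j := J j - 1)) = fr (L j) (J j - 1) * ?R"
    using cc_at[of L "J(j := J j - 1)" j] prod_rest_updJ[where j=j and L=L and J=J] by simp
  have i1: "0 < L j \<Longrightarrow> (\<lambda>r. (L(j := L j - 1)) r + J r) = ?N" by (auto simp: fun_eq_iff)
  have i2: "0 < J j \<Longrightarrow> (\<lambda>r. L r + (J(j := J j - 1)) r) = ?N" by (auto simp: fun_eq_iff)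
  have id: "(if 0 < L j + J j then fr (L j) (J j) else 0) = (if 0 < L j then fr (L j - 1) (J j) else 0) + J j * fr (L j) (J j - 1)"
    by (rule fr_id)
  show "dpow J (mpow (unitv j) h) L = (mpow (unitv j) (dpow J h) + fsc (of_nat (J j)) (dpow (J(j := J j - 1)) h)) L"
  proof (cases "L j = 0")
    case True
    show ?thesis
    proof (cases "J j = 0")
      case True
      then show ?thesis using \<open>L j = 0\<close> by (simp add: dpow_cc mpow1)
    next
      case False
      then have "cc L J = J j * cc L (J(j := J j - 1))" using c1 c3 id \<open>L j = 0\<close> by simp
      then show ?thesis using False \<open>L j = 0\<close> i2
        by (simp add: dpow_cc mpow1 vector_smult_assoc)
    qed
  next
    case False
    show ?thesis
    proof (cases "J j = 0")
      case True
      then have "cc L J = cc (L(j := L j - 1)) J" using c1 c2 id False by simp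
      then show ?thesis using False True i1
        by (simp add: dpow_cc mpow1)
    next
      case F2: False
      then have "cc L J = cc (L(j := L j - 1)) J + J j * cc L (J(j := J j - 1))"
        using c1 c2 c3 id False by (simp add: algebra_simps)
      then show ?thesis using False F2 i1 i2
        by (simp add: dpow_cc mpow1 vector_smult_assoc vector_sadd_rdistrib)
    qed
  qed
qed

lemma le_upd_Suc: assumes "I \<le> K" shows "I \<le> K(i := Suc (K i))"
  unfolding le_fun_def
proof
  fix x have "I x \<le> K x" using assms by (simp add: le_fun_def)
  then show "I x \<le> (K(i := Suc (K i))) x" by (cases "x = i") auto
qed
lemma le_upd_pred: assumes "(I::'a \<Rightarrow> nat) \<le> K" shows "I(i := I i - 1) \<le> K"
  unfolding le_fun_def
proof
  fix x have "I x \<le> K x" using assms by (simp add: le_fun_def)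
  then show "(I(i := I i - 1)) x \<le> K x" by (cases "x = i") (auto intro: order_trans[OF diff_le_self])
qed
lemma le_upd_Suc_pred: assumes "I \<le> K(i := Suc (K i))" shows "I(i := I i - 1) \<le> K"
  unfolding le_fun_def
proof
  fix x have "I x \<le> (K(i := Suc (K i))) x" using assms by (simp add: le_fun_def)
  then show "(I(i := I i - 1)) x \<le> K x" by (cases "x = i") auto
qed
lemma le_upd_case: assumes "I \<le> K(i := Suc (K i))" "\<not> I \<le> K" shows "I i = Suc (K i)"
proof -
  obtain x where x: "\<not> I x \<le> K x" using assms(2) by (auto simp: le_fun_def)
  have "I x \<le> (K(i := Suc (K i))) x" using assms(1) by (simp add: le_fun_def)
  then show ?thesis using x by (cases "x = i") auto
qed
lemma le_upd_back: assumes "I(i := I i - 1) \<le> K" shows "I \<le> K(i := Suc (K i))"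
  unfolding le_fun_def
proof
  fix x have "(I(i := I i - 1)) x \<le> K x" using assms by (simp add: le_fun_def)
  then show "I x \<le> (K(i := Suc (K i))) x" by (cases "x = i") auto
qed

lemma D3: "f_dx i (mpow I h) = mpow I (f_dx i h) + fsc (of_nat (I i)) (mpow (I(i := I i - 1)) h)"
proof (rule ext)
  fix K
  let ?M = "(\<lambda>r. K r - I r)(i := Suc (K i - I i))"
  show "f_dx i (mpow I h) K = (mpow I (f_dx i h) + fsc (of_nat (I i)) (mpow (I(i := I i - 1)) h)) K"
  proof (cases "I \<le> K")
    case True
    note a = le_upd_Suc[OF True, of i] and b = le_upd_pred[OF True, of i]
    have le: "I i \<le> K i" using True by (simp add: le_fun_def)
    have e1: "(\<lambda>r. (K(i := Suc (K i))) r - I r) = ?M" using le by (auto simp: fun_eq_iff)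
    have co: "of_nat (Suc (K i)) = (of_nat (Suc (K i - I i)) + of_nat (I i) :: complex)"
      using le by (simp add: of_nat_diff)
    have L: "f_dx i (mpow I h) K = of_nat (Suc (K i)) *s h ?M"
      unfolding f_dx_def mpow_def using a e1 by simp
    have R1: "mpow I (f_dx i h) K = of_nat (Suc (K i - I i)) *s h ?M"
      unfolding f_dx_def mpow_def using True by simp
    show ?thesis
    proof (cases "I i = 0")
      case True
      then show ?thesis using L R1 co by simp
    next
      case False
      have e2: "(\<lambda>r. K r - (I(i := I i - 1)) r) = ?M" using le False by (auto simp: fun_eq_iff)
      have R2: "mpow (I(i := I i - 1)) h K = h ?M" unfolding mpow_def using b e2 by simp
      show ?thesis using L R1 R2 co by (simp add: vector_sadd_rdistrib)
    qed
  next
    case False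
    show ?thesis
    proof (cases "I \<le> K(i := Suc (K i))")
      case True
      note Ii = le_upd_case[OF True False] and b = le_upd_Suc_pred[OF True]
      have e: "(\<lambda>r. (K(i := Suc (K i))) r - I r) = (\<lambda>r. K r - (I(i := I i - 1)) r)"
        using Ii by (auto simp: fun_eq_iff)
      have L: "f_dx i (mpow I h) K = of_nat (Suc (K i)) *s h (\<lambda>r. K r - (I(i := I i - 1)) r)"
        unfolding f_dx_def mpow_def using True e by simp
      have R1: "mpow I (f_dx i h) K = 0" unfolding mpow_def using False by simp
      have R2: "mpow (I(i := I i - 1)) h K = h (\<lambda>r. K r - (I(i := I i - 1)) r)"
        unfolding mpow_def using b by simp
      show ?thesis using L R1 R2 Ii by simp
    next
      case F2: False
      have b: "\<not> I(i := I i - 1) \<le> K"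
      proof
        assume "I(i := I i - 1) \<le> K"
        then have "I \<le> K(i := Suc (K i))" by (rule le_upd_back)
        then show False using F2 by simp
      qed
      have L: "f_dx i (mpow I h) K = 0" unfolding f_dx_def mpow_def using F2 by simp
      have R1: "mpow I (f_dx i h) K = 0" unfolding mpow_def using False by simp
      have R2: "mpow (I(i := I i - 1)) h K = 0" unfolding mpow_def using b by simp
      show ?thesis using L R1 R2 by simp
    qed
  qed
qed

lemma mpow_comm: "mpow A (mpow B h) = mpow B (mpow A h)"
  by (simp add: mpow_mpow add.commute)




definition supp :: "('m::finite,'n::finite,'k::finite) sym \<Rightarrow> ('m mi \<times> 'm mi) set" where
  "supp s = {p. s (fst p) (snd p) \<noteq> 0}"

definition tm :: "('m::finite,'n::finite,'k::finite) sym \<Rightarrow> ('m mi \<Rightarrow> complex^'n) \<Rightarrow> 'm mi \<times> 'm mi \<Rightarrow> ('m mi \<Rightarrow> complex^'k)" where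
  "tm s f p = mpow (fst p) (dpow (snd p) (fphi (s (fst p) (snd p)) f))"

lemma Ssym_iff: "s \<in> Ssym \<longleftrightarrow> finite (supp s)" by (simp add: Ssym_def supp_def)

lemma opS_tm: "opS s f = sum (tm s f) (supp s)"
  by (simp add: opS_def tm_def supp_def fphi_def)

lemma fphi_0[simp]: "fphi 0 f = 0" by (simp add: fun_eq_iff)

lemma tm_0: "s (fst p) (snd p) = 0 \<Longrightarrow> tm s f p = 0"
  by (simp add: tm_def)

lemma opS_sup: "finite P \<Longrightarrow> supp s \<subseteq> P \<Longrightarrow> opS s f = sum (tm s f) P"
  unfolding opS_tm
  by (rule sum.mono_neutral_left) (auto simp: supp_def tm_0)

lemma Ssym_add[simp]: "s \<in> Ssym \<Longrightarrow> t \<in> Ssym \<Longrightarrow> s + t \<in> Ssym"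
  unfolding Ssym_iff by (rule finite_subset[of _ "supp s \<union> supp t"]) (auto simp: supp_def)
lemma Ssym_diff[simp]: "s \<in> Ssym \<Longrightarrow> t \<in> Ssym \<Longrightarrow> s - t \<in> Ssym"
  unfolding Ssym_iff by (rule finite_subset[of _ "supp s \<union> supp t"]) (auto simp: supp_def)
lemma Ssym_uminus[simp]: "s \<in> Ssym \<Longrightarrow> - s \<in> Ssym"
  unfolding Ssym_iff by (rule finite_subset[of _ "supp s"]) (auto simp: supp_def)
lemma Ssym_zero[simp]: "0 \<in> Ssym"
  unfolding Ssym_iff by (simp add: supp_def)
lemma Ssym_ssc[simp]: "s \<in> Ssym \<Longrightarrow> ssc c s \<in> Ssym"
  unfolding Ssym_iff by (rule finite_subset[of _ "supp s"]) (auto simp: supp_def)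
lemma Ssym_sum[simp]: "(\<And>x. x \<in> S \<Longrightarrow> F x \<in> Ssym) \<Longrightarrow> sum F S \<in> Ssym"
  by (induction S rule: infinite_finite_induct) auto
lemma Ssym_hom[simp]: "s \<in> Ssym \<Longrightarrow> s_hom p q a b s \<in> Ssym"
  unfolding Ssym_iff by (rule finite_subset[of _ "supp s"]) (auto simp: supp_def s_hom_def)
lemma Ssym_rho[simp]: "s \<in> Ssym \<Longrightarrow> s_rho p a b s \<in> Ssym"
  unfolding Ssym_iff by (rule finite_subset[of _ "supp s"]) (auto simp: supp_def s_rho_def)

lemma msc_nz: "msc c A \<noteq> 0 \<Longrightarrow> A \<noteq> 0" by auto

lemma supp_mx: "supp (s_mx i s) \<subseteq> (\<lambda>p. ((fst p)(i := Suc (fst p i)), snd p)) ` supp s"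
proof
  fix x assume "x \<in> supp (s_mx i s)"
  then obtain I J where x: "x = (I, J)" "0 < I i" "s (I(i := I i - 1)) J \<noteq> 0"
    by (cases x) (auto simp: supp_def s_mx_def split: if_splits)
  then have "x = (\<lambda>p. ((fst p)(i := Suc (fst p i)), snd p)) (I(i := I i - 1), J)" by auto
  moreover have "(I(i := I i - 1), J) \<in> supp s" using x by (simp add: supp_def)
  ultimately show "x \<in> (\<lambda>p. ((fst p)(i := Suc (fst p i)), snd p)) ` supp s" by (rule image_eqI)
qed
lemma supp_mxi: "supp (s_mxi i s) \<subseteq> (\<lambda>p. (fst p, (snd p)(i := Suc (snd p i)))) ` supp s"
proof
  fix x assume "x \<in> supp (s_mxi i s)"
  then obtain I J where x: "x = (I, J)" "0 < J i" "s I (J(i := J i - 1)) \<noteq> 0"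
    by (cases x) (auto simp: supp_def s_mxi_def split: if_splits)
  then have "x = (\<lambda>p. (fst p, (snd p)(i := Suc (snd p i)))) (I, J(i := J i - 1))" by auto
  moreover have "(I, J(i := J i - 1)) \<in> supp s" using x by (simp add: supp_def)
  ultimately show "x \<in> (\<lambda>p. (fst p, (snd p)(i := Suc (snd p i)))) ` supp s" by (rule image_eqI)
qed
lemma supp_dx: "supp (s_dx i s) \<subseteq> (\<lambda>p. ((fst p)(i := fst p i - 1), snd p)) ` {p \<in> supp s. 0 < fst p i}"
proof
  fix x assume "x \<in> supp (s_dx i s)"
  then obtain I J where x: "x = (I, J)" "s (I(i := Suc (I i))) J \<noteq> 0"
    by (cases x) (auto simp: supp_def s_dx_def dest: msc_nz)
  then have "x = (\<lambda>p. ((fst p)(i := fst p i - 1), snd p)) (I(i := Suc (I i)), J)" by auto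
  moreover have "(I(i := Suc (I i)), J) \<in> {p \<in> supp s. 0 < fst p i}" using x by (simp add: supp_def)
  ultimately show "x \<in> (\<lambda>p. ((fst p)(i := fst p i - 1), snd p)) ` {p \<in> supp s. 0 < fst p i}"
    by (rule image_eqI)
qed
lemma supp_dxi: "supp (s_dxi i s) \<subseteq> (\<lambda>p. (fst p, (snd p)(i := snd p i - 1))) ` {p \<in> supp s. 0 < snd p i}"
proof
  fix x assume "x \<in> supp (s_dxi i s)"
  then obtain I J where x: "x = (I, J)" "s I (J(i := Suc (J i))) \<noteq> 0"
    by (cases x) (auto simp: supp_def s_dxi_def dest: msc_nz)
  then have "x = (\<lambda>p. (fst p, (snd p)(i := snd p i - 1))) (I, J(i := Suc (J i)))" by auto
  moreover have "(I, J(i := Suc (J i))) \<in> {p \<in> supp s. 0 < snd p i}" using x by (simp add: supp_def)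
  ultimately show "x \<in> (\<lambda>p. (fst p, (snd p)(i := snd p i - 1))) ` {p \<in> supp s. 0 < snd p i}"
    by (rule image_eqI)
qed

lemma Ssym_mx[simp]: "s \<in> Ssym \<Longrightarrow> s_mx i s \<in> Ssym"
  unfolding Ssym_iff using supp_mx finite_subset by blast
lemma Ssym_mxi[simp]: "s \<in> Ssym \<Longrightarrow> s_mxi i s \<in> Ssym"
  unfolding Ssym_iff using supp_mxi finite_subset by blast
lemma Ssym_dx[simp]: "s \<in> Ssym \<Longrightarrow> s_dx i s \<in> Ssym"
  unfolding Ssym_iff using supp_dx finite_subset by (metis (no_types, lifting) finite_imageI finite_subset mem_Collect_eq subsetI)
lemma Ssym_dxi[simp]: "s \<in> Ssym \<Longrightarrow> s_dxi i s \<in> Ssym"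
  unfolding Ssym_iff using supp_dxi finite_subset by (metis (no_types, lifting) finite_imageI finite_subset mem_Collect_eq subsetI)

lemma fphiL_add: "fphi (A + B) f = fphi A f + fphi B f" by (simp add: fun_eq_iff mvL_add)
lemma fphiL_diff: "fphi ((A::complex^_^_) - B) f = fphi A f - fphi B f" by (simp add: fun_eq_iff mvL_diff)
lemma fphiL_uminus: "fphi (- (A::complex^_^_)) f = - fphi A f" by (simp add: fun_eq_iff mvL_uminus)
lemma fphiL_msc: "fphi (msc c A) f = fsc c (fphi A f)" by (simp add: fun_eq_iff mvL_msc)
lemma tm_add: "tm (s + t) f p = tm s f p + tm t f p"
  by (simp add: tm_def fphiL_add)
lemma tm_diff: "tm (s - t) f p = tm s f p - tm t f p"
  by (simp add: tm_def fphiL_diff)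

lemma opS_add: "s \<in> Ssym \<Longrightarrow> t \<in> Ssym \<Longrightarrow> opS (s + t) f = opS s f + opS t f"
proof -
  assume a: "s \<in> Ssym" "t \<in> Ssym"
  let ?P = "supp s \<union> supp t"
  have fP: "finite ?P" using a by (simp add: Ssym_iff)
  have 1: "opS (s + t) f = sum (tm (s + t) f) ?P" by (rule opS_sup[OF fP]) (auto simp: supp_def)
  have 2: "opS s f = sum (tm s f) ?P" by (rule opS_sup[OF fP]) auto
  have 3: "opS t f = sum (tm t f) ?P" by (rule opS_sup[OF fP]) auto
  show ?thesis unfolding 1 2 3 tm_add sum.distrib ..
qed
lemma opS_diff: "s \<in> Ssym \<Longrightarrow> t \<in> Ssym \<Longrightarrow> opS (s - t) f = opS s f - opS t f"
proof -
  assume a: "s \<in> Ssym" "t \<in> Ssym"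
  let ?P = "supp s \<union> supp t"
  have fP: "finite ?P" using a by (simp add: Ssym_iff)
  have 1: "opS (s - t) f = sum (tm (s - t) f) ?P" by (rule opS_sup[OF fP]) (auto simp: supp_def)
  have 2: "opS s f = sum (tm s f) ?P" by (rule opS_sup[OF fP]) auto
  have 3: "opS t f = sum (tm t f) ?P" by (rule opS_sup[OF fP]) auto
  show ?thesis unfolding 1 2 3 tm_diff sum_subtractf ..
qed
lemma opS_zero[simp]: "opS 0 f = 0" by (simp add: opS_tm supp_def)
lemma opS_sum: "(\<And>x. x \<in> S \<Longrightarrow> F x \<in> Ssym) \<Longrightarrow> opS (sum F S) f = (\<Sum>x\<in>S. opS (F x) f)"
  by (induction S rule: infinite_finite_induct) (auto simp: opS_add)

lemma opS_fadd[simp]: "opS s (f + g) = opS s f + opS s g"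
  and opS_fdiff[simp]: "opS s (f - g) = opS s f - opS s g"
  and opS_fsum[simp]: "opS s (sum F S) = (\<Sum>x\<in>S. opS s (F x))"
  and opS_fzero[simp]: "opS s 0 = 0"
  by (simp_all add: opS_tm tm_def sum.distrib sum_subtractf flip: sum.swap[of _ S])




lemma fr_SucL: "Suc a * fr (Suc a) b = Suc (a + b) * fr a b"
proof -
  have "(Suc a * fr (Suc a) b) * fact a = fr (Suc a) b * fact (Suc a)" by (simp add: algebra_simps)
  also have "\<dots> = fact (Suc a + b)" by (rule fr_mult)
  also have "\<dots> = Suc (a + b) * fact (a + b)" by simp
  also have "\<dots> = Suc (a + b) * (fr a b * fact a)" by (simp only: fr_mult)
  finally have "(Suc a * fr (Suc a) b) * fact a = (Suc (a + b) * fr a b) * fact a" by (simp only: mult.assoc)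
  then show ?thesis by simp
qed

lemma D4: "f_dx i (dpow J X) = dpow J (f_dx i X)"
proof (rule ext)
  fix L
  let ?R = "(\<Prod>r\<in>UNIV-{i}. fr (L r) (J r))"
  have c1: "cc L J = fr (L i) (J i) * ?R" by (rule cc_at)
  have c2: "cc (L(i := Suc (L i))) J = fr (Suc (L i)) (J i) * ?R"
    using cc_at[of "L(i := Suc (L i))" J i] prod_rest_updL[where j=i and L=L and J=J] by simp
  have "Suc (L i) * (fr (Suc (L i)) (J i) * ?R) = (Suc (L i) * fr (Suc (L i)) (J i)) * ?R"
    by (simp only: mult.assoc)
  also have "\<dots> = (Suc (L i + J i) * fr (L i) (J i)) * ?R" by (simp only: fr_SucL)
  also have "\<dots> = (fr (L i) (J i) * ?R) * Suc (L i + J i)" by (simp only: ac_simps)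
  finally have co: "Suc (L i) * cc (L(i := Suc (L i))) J = cc L J * Suc (L i + J i)"
    unfolding c1 c2 .
  have co': "(of_nat (L i + 1) * of_nat (cc (L(i := L i + 1)) J) :: complex) = of_nat (cc L J) * of_nat (L i + J i + 1)"
    using co by (simp only: of_nat_mult[symmetric] Suc_eq_plus1)
  have e: "(\<lambda>r. (L(i := L i + 1)) r + J r) = (\<lambda>r. L r + J r)(i := L i + J i + 1)"
    by (auto simp: fun_eq_iff)
  show "f_dx i (dpow J X) L = dpow J (f_dx i X) L"
    apply (simp only: f_dx_def dpow_cc e)
    apply (simp only: vector_smult_assoc co')
    done
qed

lemma upd_Suc_eq: "(\<lambda>r. unitv i r + I r) = I(i := Suc (I i))"
  by (auto simp: fun_eq_iff)
lemma mpow_upd_Suc: "mpow (I(i := Suc (I i))) h = mpow (unitv i) (mpow I h)"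
  by (simp add: mpow_mpow upd_Suc_eq)

lemma inj_upd_Suc: "inj (\<lambda>I::'m mi. I(i := Suc (I i)))"
proof (rule injI)
  fix I I' :: "'m mi" assume h: "I(i := Suc (I i)) = I'(i := Suc (I' i))"
  show "I = I'"
  proof (rule ext)
    fix r
    have "(I(i := Suc (I i))) r = (I'(i := Suc (I' i))) r" using h by simp
    then show "I r = I' r" by (cases "r = i") auto
  qed
qed

lemma inj_upd_pred: "inj_on (\<lambda>I::'m mi. I(i := I i - 1)) {I. 0 < I i}"
proof (rule inj_onI)
  fix I I' :: "'m mi" assume h: "I(i := I i - 1) = I'(i := I' i - 1)" and a: "I \<in> {I. 0 < I i}" "I' \<in> {I. 0 < I i}"
  show "I = I'"
  proof (rule ext)
    fix r
    have "(I(i := I i - 1)) r = (I'(i := I' i - 1)) r" using h by simp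
    then show "I r = I' r" using a by (cases "r = i") auto
  qed
qed

context
  fixes s :: "('m::finite,'n::finite,'k::finite) sym"
  assumes S: "s \<in> Ssym"
begin

lemma fin: "finite (supp s)" using S by (simp add: Ssym_iff)

lemma S1: "opS (s_mx i s) f = mpow (unitv i) (opS s f)"
proof -
  let ?g = "\<lambda>p::'m mi \<times> 'm mi. ((fst p)(i := Suc (fst p i)), snd p)"
  have inj: "inj_on ?g (supp s)"
    using inj_upd_Suc[of i] by (auto simp: inj_on_def)
  have "opS (s_mx i s) f = sum (tm (s_mx i s) f) (?g ` supp s)"
    by (rule opS_sup[OF finite_imageI[OF fin] supp_mx])
  also have "\<dots> = sum (tm (s_mx i s) f \<circ> ?g) (supp s)" by (rule sum.reindex[OF inj])
  also have "\<dots> = sum (\<lambda>p. mpow (unitv i) (tm s f p)) (supp s)"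
  proof (rule sum.cong[OF refl])
    fix p :: "'m mi \<times> 'm mi"
    obtain I J where p: "p = (I, J)" by (cases p)
    have "s_mx i s (I(i := Suc (I i))) J = s I J" by (simp add: s_mx_def)
    then show "(tm (s_mx i s) f \<circ> ?g) p = mpow (unitv i) (tm s f p)"
      by (simp add: p tm_def mpow_upd_Suc)
  qed
  also have "\<dots> = mpow (unitv i) (opS s f)" by (simp add: opS_tm)
  finally show ?thesis .
qed

lemma S2: "opS (s_mxi i s) f = opS s (f_dx i f)"
proof -
  let ?g = "\<lambda>p::'m mi \<times> 'm mi. (fst p, (snd p)(i := Suc (snd p i)))"
  have inj: "inj_on ?g (supp s)"
    using inj_upd_Suc[of i] by (auto simp: inj_on_def)
  have "opS (s_mxi i s) f = sum (tm (s_mxi i s) f) (?g ` supp s)"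
    by (rule opS_sup[OF finite_imageI[OF fin] supp_mxi])
  also have "\<dots> = sum (tm (s_mxi i s) f \<circ> ?g) (supp s)" by (rule sum.reindex[OF inj])
  also have "\<dots> = sum (tm s (f_dx i f)) (supp s)"
  proof (rule sum.cong[OF refl])
    fix p :: "'m mi \<times> 'm mi"
    obtain I J where p: "p = (I, J)" by (cases p)
    have "s_mxi i s I (J(i := Suc (J i))) = s I J" by (simp add: s_mxi_def)
    then show "(tm (s_mxi i s) f \<circ> ?g) p = tm s (f_dx i f) p"
      by (simp add: p tm_def D1[symmetric])
  qed
  also have "\<dots> = opS s (f_dx i f)" by (simp add: opS_tm)
  finally show ?thesis .
qed

lemma S3: "opS (s_dx i s) f = f_dx i (opS s f) - opS s (f_dx i f)"
proof -
  let ?g = "\<lambda>p::'m mi \<times> 'm mi. ((fst p)(i := fst p i - 1), snd p)"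
  let ?Q = "{p \<in> supp s. 0 < fst p i}"
  let ?T = "\<lambda>p::'m mi \<times> 'm mi. fsc (of_nat (fst p i)) (mpow ((fst p)(i := fst p i - 1)) (dpow (snd p) (fphi (s (fst p) (snd p)) f)))"
  have inj: "inj_on ?g ?Q"
    using inj_upd_pred[of i] by (auto simp: inj_on_def)
  have finQ: "finite ?Q" using fin by simp
  have "opS (s_dx i s) f = sum (tm (s_dx i s) f) (?g ` ?Q)"
    by (rule opS_sup[OF finite_imageI[OF finQ] supp_dx])
  also have "\<dots> = sum (tm (s_dx i s) f \<circ> ?g) ?Q" by (rule sum.reindex[OF inj])
  also have "\<dots> = sum ?T ?Q"
  proof (rule sum.cong[OF refl])
    fix p :: "'m mi \<times> 'm mi" assume "p \<in> ?Q"
    then obtain I J where p: "p = (I, J)" and pos: "0 < I i" by (cases p) auto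
    have "s_dx i s (I(i := I i - 1)) J = msc (of_nat (I i)) (s I J)"
      using pos by (simp add: s_dx_def)
    then show "(tm (s_dx i s) f \<circ> ?g) p = ?T p"
      by (simp add: p tm_def fphiL_msc)
  qed
  also have "\<dots> = sum ?T (supp s)"
    by (rule sum.mono_neutral_left[OF fin]) auto
  also have "\<dots> = sum (\<lambda>p. f_dx i (tm s f p) - tm s (f_dx i f) p) (supp s)"
  proof (rule sum.cong[OF refl])
    fix p :: "'m mi \<times> 'm mi"
    show "?T p = f_dx i (tm s f p) - tm s (f_dx i f) p"
      by (simp add: tm_def D3 D4)
  qed
  also have "\<dots> = f_dx i (opS s f) - opS s (f_dx i f)" by (simp add: opS_tm sum_subtractf)
  finally show ?thesis .
qed

lemma S4: "opS (s_dxi i s) f = opS s (mpow (unitv i) f) - mpow (unitv i) (opS s f)"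
proof -
  let ?g = "\<lambda>p::'m mi \<times> 'm mi. (fst p, (snd p)(i := snd p i - 1))"
  let ?Q = "{p \<in> supp s. 0 < snd p i}"
  let ?T = "\<lambda>p::'m mi \<times> 'm mi. fsc (of_nat (snd p i)) (mpow (fst p) (dpow ((snd p)(i := snd p i - 1)) (fphi (s (fst p) (snd p)) f)))"
  have inj: "inj_on ?g ?Q"
    using inj_upd_pred[of i] by (auto simp: inj_on_def)
  have finQ: "finite ?Q" using fin by simp
  have "opS (s_dxi i s) f = sum (tm (s_dxi i s) f) (?g ` ?Q)"
    by (rule opS_sup[OF finite_imageI[OF finQ] supp_dxi])
  also have "\<dots> = sum (tm (s_dxi i s) f \<circ> ?g) ?Q" by (rule sum.reindex[OF inj])
  also have "\<dots> = sum ?T ?Q"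
  proof (rule sum.cong[OF refl])
    fix p :: "'m mi \<times> 'm mi" assume "p \<in> ?Q"
    then obtain I J where p: "p = (I, J)" and pos: "0 < J i" by (cases p) auto
    have "s_dxi i s I (J(i := J i - 1)) = msc (of_nat (J i)) (s I J)"
      using pos by (simp add: s_dxi_def)
    then show "(tm (s_dxi i s) f \<circ> ?g) p = ?T p"
      by (simp add: p tm_def fphiL_msc)
  qed
  also have "\<dots> = sum ?T (supp s)"
    by (rule sum.mono_neutral_left[OF fin]) auto
  also have "\<dots> = sum (\<lambda>p. tm s (mpow (unitv i) f) p - mpow (unitv i) (tm s f p)) (supp s)"
  proof (rule sum.cong[OF refl])
    fix p :: "'m mi \<times> 'm mi"
    show "?T p = tm s (mpow (unitv i) f) p - mpow (unitv i) (tm s f p)"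
      by (simp add: tm_def D2 mpow_comm[of "unitv i"] fphi_def[symmetric])
  qed
  also have "\<dots> = opS s (mpow (unitv i) f) - mpow (unitv i) (opS s f)" by (simp add: opS_tm sum_subtractf)
  finally show ?thesis .
qed

lemma S5: "opS (s_hom p q a b s) f = fphi (q a b) (opS s f) - opS s (fphi (p a b) f)"
proof -
  have "opS (s_hom p q a b s) f = sum (tm (s_hom p q a b s) f) (supp s)"
    by (rule opS_sup[OF fin]) (auto simp: supp_def s_hom_def)
  also have "\<dots> = sum (\<lambda>x. fphi (q a b) (tm s f x) - tm s (fphi (p a b) f) x) (supp s)"
    by (rule sum.cong[OF refl]) (simp add: tm_def s_hom_def fphiL_diff fphi_fphi)
  also have "\<dots> = fphi (q a b) (opS s f) - opS s (fphi (p a b) f)" by (simp add: opS_tm sum_subtractf)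
  finally show ?thesis .
qed

lemma S6: "opS (s_rho p a b s) f = - opS s (fphi (p a b) f)"
proof -
  have "opS (s_rho p a b s) f = sum (tm (s_rho p a b s) f) (supp s)"
    by (rule opS_sup[OF fin]) (auto simp: supp_def s_rho_def)
  also have "\<dots> = sum (\<lambda>x. - tm s (fphi (p a b) f) x) (supp s)"
    by (rule sum.cong[OF refl]) (simp add: tm_def s_rho_def fphiL_uminus fphi_fphi)
  also have "\<dots> = - opS s (fphi (p a b) f)" by (simp add: opS_tm sum_negf)
  finally show ?thesis .
qed

end




lemma opS_inj:
  fixes s :: "('m::finite,'n::finite,'k::finite) sym"
  assumes S: "s \<in> Ssym" and Z: "\<forall>f\<in>Fpoly. opS s f = 0"
  shows "s = 0"
proof (rule ccontr)
  assume "s \<noteq> 0"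
  then obtain I1 J1 where "s I1 J1 \<noteq> 0" by (auto simp: fun_eq_iff)
  then have in1: "(I1, J1) \<in> supp s" by (simp add: supp_def)
  define deg where "deg = (\<lambda>J::'m mi. \<Sum>r\<in>UNIV. J r)"
  obtain p0 where p0: "p0 \<in> supp s" and minp: "\<forall>p. p \<in> supp s \<longrightarrow> deg (snd p0) \<le> deg (snd p)"
    using ex_has_least_nat[of "\<lambda>p. p \<in> supp s" "(I1,J1)" "\<lambda>p. deg (snd p)"] in1 by blast
  obtain I0 J0 where p0e: "p0 = (I0, J0)" by (cases p0)
  have nz: "s I0 J0 \<noteq> 0" using p0 p0e by (simp add: supp_def)
  obtain v where v: "s I0 J0 *v v \<noteq> 0" using nz matrix_eq[of "s I0 J0" 0] by auto
  define f :: "'m mi \<Rightarrow> complex^'n" where "f = (\<lambda>L. if L = J0 then v else 0)"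
  have "finite {K. f K \<noteq> 0}"
    by (rule finite_subset[of _ "{J0}"]) (auto simp: f_def)
  then have fF: "f \<in> Fpoly" unfolding Fpoly_def by simp
  have key: "tm s f p I0 = 0" if pin: "p \<in> supp s" and pne: "p \<noteq> (I0, J0)" for p
  proof -
    obtain I J where pe: "p = (I, J)" by (cases p)
    have tmv: "tm s f p I0 = (if I \<le> I0 then of_nat (cc (\<lambda>r. I0 r - I r) J) *s (s I J *v f (\<lambda>r. I0 r - I r + J r)) else 0)"
      by (simp add: pe tm_def mpow_def dpow_cc)
    have "f (\<lambda>r. I0 r - I r + J r) = 0" if le: "I \<le> I0"
    proof (rule ccontr)
      assume "f (\<lambda>r. I0 r - I r + J r) \<noteq> 0"
      then have eq: "(\<lambda>r. I0 r - I r + J r) = J0" by (auto simp: f_def split: if_splits)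
      have "deg J0 = (\<Sum>r\<in>UNIV. I0 r - I r) + deg J"
        unfolding deg_def eq[symmetric] by (simp add: sum.distrib)
      moreover have "deg J0 \<le> deg J" using minp pin pe p0e by force
      ultimately have "(\<Sum>r\<in>UNIV. I0 r - I r) = 0" by simp
      then have "\<forall>r. I0 r - I r = 0" by simp
      then have "I = I0" using le by (auto simp: le_fun_def fun_eq_iff intro: antisym)
      moreover then have "J = J0" using eq by (simp add: fun_eq_iff)
      ultimately show False using pne pe by simp
    qed
    then show ?thesis unfolding tmv by simp
  qed
  have val: "tm s f (I0, J0) I0 = of_nat (cc (\<lambda>_. 0) J0) *s (s I0 J0 *v v)"
    by (simp add: tm_def mpow_def dpow_cc f_def)
  have ccnz: "cc (\<lambda>_. 0::nat) J0 \<noteq> 0" by (simp add: cc_def)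
  have "opS s f I0 = (\<Sum>p\<in>supp s. tm s f p I0)" by (simp add: opS_tm sum_app)
  also have "\<dots> = tm s f (I0, J0) I0 + (\<Sum>p\<in>supp s - {(I0, J0)}. tm s f p I0)"
    using S p0 p0e by (simp add: Ssym_iff sum.remove)
  also have "(\<Sum>p\<in>supp s - {(I0, J0)}. tm s f p I0) = 0"
    by (rule sum.neutral) (auto intro: key)
  finally have "opS s f I0 = of_nat (cc (\<lambda>_. 0) J0) *s (s I0 J0 *v v)" using val by simp
  moreover have "opS s f I0 = 0" using Z fF by simp
  ultimately show False using v ccnz by (simp add: vec_eq_iff)
qed

lemma LieNS_char:
  fixes s t :: "('m::finite,'n::finite,'k::finite) sym"
  assumes S: "s \<in> Ssym" and T: "t \<in> Ssym"
    and E: "\<And>f. opS t f = LieF q X (opS s f) - opS s (LieF p X f)"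
  shows "LieNS p q X s = t"
  unfolding LieNS_def
proof (rule the_equality)
  show "t \<in> Ssym \<and> (\<forall>f\<in>Fpoly. opS t f = LieF q X (opS s f) - opS s (LieF p X f))" using T E by simp
next
  fix t' assume h: "t' \<in> Ssym \<and> (\<forall>f\<in>Fpoly. opS t' f = LieF q X (opS s f) - opS s (LieF p X f))"
  have "t' - t = 0"
  proof (rule opS_inj)
    show "t' - t \<in> Ssym" using h T by simp
    show "\<forall>f\<in>Fpoly. opS (t' - t) f = 0" using h T E by (simp add: opS_diff)
  qed
  then show "t' = t" by simp
qed




lemmas Srules = S1 S2 S3 S4 S5 S6 opS_add opS_diff opS_sum

lemma LieS_d_S[simp]: "s \<in> Ssym \<Longrightarrow> LieS p q (vf_d i) s \<in> Ssym" by (simp add: LieS_d)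
lemma LieS_xd_S[simp]: "s \<in> Ssym \<Longrightarrow> LieS p q (vf_xd i j) s \<in> Ssym" by (simp add: LieS_xd)
lemma LieS_E_S[simp]: "s \<in> Ssym \<Longrightarrow> LieS p q vf_E s \<in> Ssym" by (simp add: LieS_E)
lemma LieS_xE_S[simp]: "s \<in> Ssym \<Longrightarrow> LieS p q (vf_xE i) s \<in> Ssym" by (simp add: LieS_xE)

context fixes s :: "('m::finite,'n::finite,'k::finite) sym" assumes S: "s \<in> Ssym"
begin

lemma NS_d: "LieNS p q (vf_d i) s = LieS p q (vf_d i) s"
  by (rule LieNS_char[OF S]) (simp_all add: S LieS_d LieF_d Srules)

lemma NS_xd: "LieNS p q (vf_xd i j) s = LieS p q (vf_xd i j) s"
  by (rule LieNS_char[OF S]) (simp_all add: S LieS_xd LieF_xd Srules algebra_simps)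

lemma NS_E: "LieNS p q vf_E s = LieS p q vf_E s"
  by (rule LieNS_char[OF S]) (simp_all add: S LieS_E LieF_E Srules algebra_simps sum.distrib sum_subtractf)

end

definition Ccorr :: "('m::finite \<Rightarrow> 'm \<Rightarrow> complex^'n::finite^'n) \<Rightarrow> 'm \<Rightarrow> ('m,'n,'k::finite) sym \<Rightarrow> ('m,'n,'k) sym" where
  "Ccorr p i s = - (\<Sum>r\<in>UNIV. s_mxi r (s_dxi r (s_dxi i s))) + (\<Sum>k\<in>UNIV. s_rho p i k (s_dxi k s))
     + (\<Sum>r\<in>UNIV. s_rho p r r (s_dxi i s))"

lemma NS_xE: "s \<in> Ssym \<Longrightarrow> LieNS p q (vf_xE i) s = LieS p q (vf_xE i) s + Ccorr p i s"
  apply (rule LieNS_char)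
    apply simp
   apply (simp add: Ccorr_def)
  apply (simp add: LieS_xE LieF_xE Ccorr_def Srules algebra_simps sum.distrib sum_subtractf mpow_comm)
  done




lemma sumC: "(\<Sum>i\<in>UNIV. Ccorr p i (s_dx i s)) =
   (\<Sum>i\<in>UNIV. \<Sum>j\<in>UNIV. s_rho p i j (s_dxi j (s_dx i s))) + rhoE p (Div s) - Exi (Div s)"
  apply (simp add: Ccorr_def rhoE_def Exi_def Div_def sum.distrib sum_subtractf)
  apply (subst (1 2) sum.swap)
  apply (rule refl)
  done

lemma part2: "s \<in> Ssym \<Longrightarrow> OmegaA (LieNS p q) s =
             OmegaA (LieS p q) s
             - ssc 2 (\<Sum>i\<in>UNIV. \<Sum>j\<in>UNIV. s_rho p i j (s_dxi j (s_dx i s)))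
             - ssc 2 (rhoE p (Div s) - Exi (Div s))"
proof -
  assume S: "s \<in> Ssym"
  have A: "OmegaA (LieNS p q) s = OmegaA (LieS p q) s - ssc 2 (\<Sum>i\<in>UNIV. Ccorr p i (s_dx i s))"
    unfolding OmegaA_def using S by (simp add: NS_xd NS_d NS_E NS_xE LieS_d sum.distrib)
  show ?thesis unfolding A sumC by (simp add: algebra_simps)
qed

lemma mm_mat: "(A::complex^'n^'k) ** mat c = msc c A"
  by (simp add: vec_eq_iff matrix_matrix_mult_def mat_def if_distrib[of "\<lambda>x. _ * x"] sum.delta'
      cong: if_cong)

lemma part3:
  fixes s :: "('m::finite,'n::finite,'k::finite) sym"
  assumes S: "s \<in> Ssym" and P: "p = (\<lambda>i j. if i = j then mat \<gamma> else 0)"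
  shows "OmegaA (LieNS p q) s = OmegaA (LieS p q) s
               + ssc 2 (Exi (Div s) + ssc (of_nat (CARD('m) + 1) * \<gamma>) (Div s))"
proof -
  have r: "s_rho p i j t = (if i = j then ssc (- \<gamma>) t else 0)" for i j and t :: "('m,'n,'k) sym"
    by (auto simp: P s_rho_def mm_mat fun_eq_iff vec_eq_iff)
  have 1: "(\<Sum>i\<in>UNIV. \<Sum>j\<in>UNIV. s_rho p i j (s_dxi j (s_dx i s))) = ssc (- \<gamma>) (Div s)"
    by (simp add: r Div_def cong: if_cong)
  have 2: "rhoE p (Div s) = (\<Sum>r\<in>(UNIV::'m set). ssc (- \<gamma>) (Div s))"
    by (simp add: rhoE_def r)
  show ?thesis unfolding part2[OF S] 1 2
    by (simp add: fun_eq_iff vec_eq_iff sum_app algebra_simps of_nat_index)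
qed


theorem mainTheorem8:
  fixes \<phi> :: "'m::finite \<Rightarrow> 'm \<Rightarrow> complex^'n^'n"
    and \<phi>' :: "'m \<Rightarrow> 'm \<Rightarrow> complex^'k^'k"
  assumes "is_glrep \<phi>" and "is_glrep \<phi>'"
  shows "(\<forall>s\<in>(Ssym :: ('m,'n,'k) sym set).
           OmegaA (LieS \<phi> \<phi>') s =
             homOmega \<phi> \<phi>' s
             - ssc 2 (\<Sum>i\<in>UNIV. \<Sum>j\<in>UNIV. s_hom \<phi> \<phi>' i j (s_mxi i (s_dxi j s)))
             + homE \<phi> \<phi>' (homE \<phi> \<phi>' s - ssc 2 (Exi s) - ssc (of_nat (CARD('m) + 1)) s)
             + ssc 2 (Exi (Exi s + ssc (of_nat CARD('m)) s)))
       \<and> (\<forall>s\<in>(Ssym :: ('m,'n,'k) sym set).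
           OmegaA (LieNS \<phi> \<phi>') s =
             OmegaA (LieS \<phi> \<phi>') s
             - ssc 2 (\<Sum>i\<in>UNIV. \<Sum>j\<in>UNIV. s_rho \<phi> i j (s_dxi j (s_dx i s)))
             - ssc 2 (rhoE \<phi> (Div s) - Exi (Div s)))
       \<and> (\<forall>\<gamma>::complex. CARD('n) = 1 \<and> \<phi> = (\<lambda>i j. if i = j then mat \<gamma> else 0) \<longrightarrow>
           (\<forall>s\<in>(Ssym :: ('m,'n,'k) sym set).
             OmegaA (LieNS \<phi> \<phi>') s =
               OmegaA (LieS \<phi> \<phi>') s
               + ssc 2 (Exi (Div s) + ssc (of_nat (CARD('m) + 1) * \<gamma>) (Div s))))"
  using part1 part2 part3 by blast

end
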